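(* Let $n\in\mathbb{N}$, $a<b$, and let $f\colon[a,b]\to\mathbb{R}$ be such that $f^{(n-1)}$ is absolutely continuous and $f^{(n)}\in L^\infty([a,b])$. Define $$E_n(f)=\int_a^b f(x)\,dx-\frac{1}{n!}\sum_{k=0}^{n-1}\left[\frac{(b-a)^{k+1}(2n-k)!\,(n-k-1)!}{2^{2k+2}(2n-2k-1)!\,(k+1)!}\right]\left[f^{(k)}(a)+(-1)^{k}f^{(k)}(b)\right].$$ Then $$|E_n(f)|\leq \frac{\|f^{(n)}\|_\infty (b-a)^{n+1}}{2^{2n}n!},$$ and this estimate is sharp in the sense that the coefficient of $\|f^{(n)}\|_\infty$ cannot be reduced.
   Context: $\|g\|_\infty$ is the essential supremum of $|g|$ on $[a,b]$. *)

theory Defs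
  imports "HOL-Analysis.Analysis" "HOL-Probability.Essential_Supremum"
begin

definition abs_cont_on :: "real \<Rightarrow> real \<Rightarrow> (real \<Rightarrow> real) \<Rightarrow> bool" where
  "abs_cont_on a b g \<longleftrightarrow>
     (\<forall>e>0. \<exists>d>0. \<forall>(m::nat) (u::nat \<Rightarrow> real) v.
        (\<forall>i<m. a \<le> u i \<and> u i \<le> v i \<and> v i \<le> b) \<and>
        (\<forall>i<m. \<forall>j<m. i \<noteq> j \<longrightarrow> v i \<le> u j \<or> v j \<le> u i) \<and>
        (\<Sum>i<m. v i - u i) < d
        \<longrightarrow> (\<Sum>i<m. \<bar>g (v i) - g (u i)\<bar>) < e)"

definition Linf_norm :: "real \<Rightarrow> real \<Rightarrow> (real \<Rightarrow> real) \<Rightarrow> ereal" where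
  "Linf_norm a b g = esssup (lebesgue_on {a..b}) (\<lambda>x. ereal \<bar>g x\<bar>)"

definition in_Linf :: "real \<Rightarrow> real \<Rightarrow> (real \<Rightarrow> real) \<Rightarrow> bool" where
  "in_Linf a b g \<longleftrightarrow> g \<in> borel_measurable (lebesgue_on {a..b}) \<and> Linf_norm a b g < \<infinity>"

text \<open>D k plays the role of f^(k), k = 0..n: D 0 = f on [a,b]; D k is the (one-sided at the
  endpoints) derivative of D (k-1) on [a,b] for k \<le> n-1; D (n-1) is absolutely continuous
  on [a,b]; D n is its derivative almost everywhere on [a,b] and lies in L^infinity.\<close>
definition deriv_hyp :: "nat \<Rightarrow> real \<Rightarrow> real \<Rightarrow> (real \<Rightarrow> real) \<Rightarrow> (nat \<Rightarrow> real \<Rightarrow> real) \<Rightarrow> bool" where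
  "deriv_hyp n a b f D \<longleftrightarrow>
     (\<forall>x\<in>{a..b}. D 0 x = f x) \<and>
     (\<forall>k. Suc k < n \<longrightarrow> (\<forall>x\<in>{a..b}. (D k has_real_derivative D (Suc k) x) (at x within {a..b}))) \<and>
     abs_cont_on a b (D (n - 1)) \<and>
     (AE x in lebesgue_on {a..b}. (D (n - 1) has_real_derivative D n x) (at x within {a..b})) \<and>
     in_Linf a b (D n)"

definition E_n :: "nat \<Rightarrow> real \<Rightarrow> real \<Rightarrow> (real \<Rightarrow> real) \<Rightarrow> (nat \<Rightarrow> real \<Rightarrow> real) \<Rightarrow> real" where
  "E_n n a b f D = integral {a..b} f
     - (1 / fact n) * (\<Sum>k<n.
         ((b - a) ^ (k + 1) * fact (2 * n - k) * fact (n - k - 1)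
           / (2 ^ (2 * k + 2) * fact (2 * n - 2 * k - 1) * fact (k + 1)))
         * (D k a + (-1) ^ k * D k b))"

end

theory Submission
  imports Defs
begin

lemma ac_family:
  assumes ac: "abs_cont_on a b F" and e: "e > 0"
  obtains d where "d > 0"
    "\<And>S. finite S \<Longrightarrow> (\<forall>K\<in>S. Inf K < Sup K \<and> a \<le> Inf K \<and> Sup K \<le> b) \<Longrightarrow>
       (\<forall>K\<in>S. \<forall>L\<in>S. K \<noteq> L \<longrightarrow> {Inf K<..<Sup K} \<inter> {Inf L<..<Sup L} = {}) \<Longrightarrow>
       (\<Sum>K\<in>S. Sup K - Inf K) < d \<Longrightarrow> (\<Sum>K\<in>S. \<bar>F (Sup K) - F (Inf K)\<bar>) < e"
proof -
  from ac[unfolded abs_cont_on_def, rule_format, OF e] obtain d where d: "d > 0" and dP0: "\<forall>(m::nat) (u::nat \<Rightarrow> real) v.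
        (\<forall>i<m. a \<le> u i \<and> u i \<le> v i \<and> v i \<le> b) \<and>
        (\<forall>i<m. \<forall>j<m. i \<noteq> j \<longrightarrow> v i \<le> u j \<or> v j \<le> u i) \<and>
        (\<Sum>i<m. v i - u i) < d \<longrightarrow> (\<Sum>i<m. \<bar>F (v i) - F (u i)\<bar>) < e"
    by blast
  have dP: "\<And>(m::nat) (u::nat \<Rightarrow> real) v.
        (\<forall>i<m. a \<le> u i \<and> u i \<le> v i \<and> v i \<le> b) \<Longrightarrow>
        (\<forall>i<m. \<forall>j<m. i \<noteq> j \<longrightarrow> v i \<le> u j \<or> v j \<le> u i) \<Longrightarrow>
        (\<Sum>i<m. v i - u i) < d \<Longrightarrow> (\<Sum>i<m. \<bar>F (v i) - F (u i)\<bar>) < e"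
    using dP0 by blast
  show ?thesis
  proof (rule that[OF d])
    fix S :: "real set set"
    assume fin: "finite S" and iv: "\<forall>K\<in>S. Inf K < Sup K \<and> a \<le> Inf K \<and> Sup K \<le> b"
      and dis: "\<forall>K\<in>S. \<forall>L\<in>S. K \<noteq> L \<longrightarrow> {Inf K<..<Sup K} \<inter> {Inf L<..<Sup L} = {}"
      and sm: "(\<Sum>K\<in>S. Sup K - Inf K) < d"
    obtain h where h: "bij_betw h {0..<card S} S" using ex_bij_betw_nat_finite[OF fin] by blast
    have hS: "\<And>i. i < card S \<Longrightarrow> h i \<in> S" using h by (auto simp: bij_betw_def)
    have hinj: "\<And>i j. i < card S \<Longrightarrow> j < card S \<Longrightarrow> i \<noteq> j \<Longrightarrow> h i \<noteq> h j"
      using h by (auto simp: bij_betw_def inj_on_def)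
    have e1: "(\<Sum>i<card S. Sup (h i) - Inf (h i)) = (\<Sum>K\<in>S. Sup K - Inf K)"
      using sum.reindex_bij_betw[OF h, of "\<lambda>K. Sup K - Inf K"] by (simp add: atLeast0LessThan)
    have e2: "(\<Sum>i<card S. \<bar>F (Sup (h i)) - F (Inf (h i))\<bar>) = (\<Sum>K\<in>S. \<bar>F (Sup K) - F (Inf K)\<bar>)"
      using sum.reindex_bij_betw[OF h, of "\<lambda>K. \<bar>F (Sup K) - F (Inf K)\<bar>"] by (simp add: atLeast0LessThan)
    have "(\<Sum>i<card S. \<bar>F (Sup (h i)) - F (Inf (h i))\<bar>) < e"
    proof (rule dP)
      show "\<forall>i<card S. a \<le> Inf (h i) \<and> Inf (h i) \<le> Sup (h i) \<and> Sup (h i) \<le> b"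
        using hS iv by (simp add: less_imp_le)
      show "\<forall>i<card S. \<forall>j<card S. i \<noteq> j \<longrightarrow> Sup (h i) \<le> Inf (h j) \<or> Sup (h j) \<le> Inf (h i)"
      proof (intro allI impI)
        fix i j assume ij: "i < card S" "j < card S" "i \<noteq> j"
        have D: "{Inf (h i)<..<Sup (h i)} \<inter> {Inf (h j)<..<Sup (h j)} = {}"
          using dis hS[OF ij(1)] hS[OF ij(2)] hinj[OF ij] by simp
        have L1: "Inf (h i) < Sup (h i)" "Inf (h j) < Sup (h j)" using iv hS ij by auto
        show "Sup (h i) \<le> Inf (h j) \<or> Sup (h j) \<le> Inf (h i)"
        proof (rule ccontr)
          assume "\<not> ?thesis"
          then have "(max (Inf (h i)) (Inf (h j)) + min (Sup (h i)) (Sup (h j)))/2 \<in>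
             {Inf (h i)<..<Sup (h i)} \<inter> {Inf (h j)<..<Sup (h j)}" using L1 by auto
          then show False using D by blast
        qed
      qed
      show "(\<Sum>i<card S. Sup (h i) - Inf (h i)) < d" using e1 sm by simp
    qed
    then show "(\<Sum>K\<in>S. \<bar>F (Sup K) - F (Inf K)\<bar>) < e" using e2 by simp
  qed
qed

abbreviation cnt :: "real set \<Rightarrow> real" where "cnt K \<equiv> Henstock_Kurzweil_Integration.content K"

lemma tdiv_elem:
  assumes p: "p tagged_division_of {a..b::real}" and xK: "(x,K) \<in> p"
  shows "K = {Inf K..Sup K} \<and> Inf K \<le> Sup K \<and> a \<le> Inf K \<and> Sup K \<le> b \<and> x \<in> K
     \<and> cnt K = Sup K - Inf K \<and> interior K = {Inf K<..<Sup K}"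
proof -
  obtain u v where K: "K = cbox u v" using tagged_division_ofD(4)[OF p xK] by blast
  have xk: "x \<in> K" using tagged_division_ofD(2)[OF p xK] .
  have sub: "K \<subseteq> {a..b}" using tagged_division_ofD(3)[OF p xK] .
  have uv: "u \<le> v" using xk K by auto
  have I: "Inf K = u" "Sup K = v" using uv K by auto
  have "a \<le> u" "v \<le> b" using sub uv K by auto
  then show ?thesis using I uv K xk by auto
qed

lemma ftc_ac_negl:
  fixes F f :: "real \<Rightarrow> real"
  assumes ab: "a \<le> b" and ac: "abs_cont_on a b F" and N: "negligible N"
    and der: "\<And>x. x \<in> {a..b} - N \<Longrightarrow> (F has_real_derivative f x) (at x within {a..b})"
  shows "(f has_integral (F b - F a)) {a..b}"
proof -
  define g where "g x = (if x \<in> N then 0 else f x)" for x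
  have "(g has_integral (F b - F a)) {a..b}"
    unfolding has_integral_real
  proof (intro allI impI)
    fix e :: real assume e: "e > 0"
    obtain d where d: "d > 0" and dP: "\<And>S. finite S \<Longrightarrow> (\<forall>K\<in>S. Inf K < Sup K \<and> a \<le> Inf K \<and> Sup K \<le> b) \<Longrightarrow>
       (\<forall>K\<in>S. \<forall>L\<in>S. K \<noteq> L \<longrightarrow> {Inf K<..<Sup K} \<inter> {Inf L<..<Sup L} = {}) \<Longrightarrow>
       (\<Sum>K\<in>S. Sup K - Inf K) < d \<Longrightarrow> (\<Sum>K\<in>S. \<bar>F (Sup K) - F (Inf K)\<bar>) < e/2"
      by (rule ac_family[OF ac half_gt_zero[OF e]]) blast
    have "(indicator N has_integral (0::real)) {a..b}"
      using N unfolding negligible_def by (metis box_real(2))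
    then obtain \<gamma>1 where g1: "gauge \<gamma>1" and g1P: "\<And>\<D>. \<D> tagged_division_of {a..b} \<Longrightarrow> \<gamma>1 fine \<D> \<Longrightarrow>
        norm (sum (\<lambda>(x,k). cnt k *\<^sub>R (indicator N x::real)) \<D> - 0) < d"
      unfolding has_integral_real using d by meson
    define e' where "e' = e / (2 * (b - a) + 2)"
    have e'0: "e' > 0" unfolding e'_def using e ab by auto
    have "\<forall>x. \<exists>\<delta>>0. x \<in> {a..b} - N \<longrightarrow>
         (\<forall>y\<in>{a..b}. norm (y-x) < \<delta> \<longrightarrow> norm (F y - F x - (y-x) *\<^sub>R f x) \<le> e' * norm (y-x))"
    proof
      fix x
      show "\<exists>\<delta>>0. x \<in> {a..b} - N \<longrightarrow>
         (\<forall>y\<in>{a..b}. norm (y-x) < \<delta> \<longrightarrow> norm (F y - F x - (y-x) *\<^sub>R f x) \<le> e' * norm (y-x))"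
      proof (cases "x \<in> {a..b} - N")
        case True
        have "(F has_vector_derivative f x) (at x within {a..b})"
          using der[OF True] by (simp add: has_real_derivative_iff_has_vector_derivative)
        then show ?thesis
          unfolding has_vector_derivative_def has_derivative_within_alt using e'0 by blast
      next
        case False then show ?thesis by (intro exI[of _ 1]) auto
      qed
    qed
    then obtain \<delta> where \<delta>0: "\<And>x. \<delta> x > 0" and \<delta>P: "\<And>x y. x \<in> {a..b} - N \<Longrightarrow> y \<in> {a..b} \<Longrightarrow>
       norm (y-x) < \<delta> x \<Longrightarrow> norm (F y - F x - (y-x) *\<^sub>R f x) \<le> e' * norm (y-x)"
      by metis
    show "\<exists>\<gamma>. gauge \<gamma> \<and> (\<forall>\<D>. \<D> tagged_division_of {a..b} \<and> \<gamma> fine \<D> \<longrightarrow>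
        norm (sum (\<lambda>(x,k). cnt k *\<^sub>R g x) \<D> - (F b - F a)) < e)"
    proof (intro exI conjI allI impI)
      show "gauge (\<lambda>x. ball x (\<delta> x) \<inter> \<gamma>1 x)"
        using gauge_Int[OF gauge_ball_dependent[of \<delta>] g1] \<delta>0 by simp
      fix p assume "p tagged_division_of {a..b} \<and> (\<lambda>x. ball x (\<delta> x) \<inter> \<gamma>1 x) fine p"
      then have p: "p tagged_division_of {a..b}" and f1: "(\<lambda>x. ball x (\<delta> x)) fine p" and f2: "\<gamma>1 fine p"
        by (auto simp: fine_Int)
      have finp: "finite p" using p by blast
      define p2 where "p2 = {(x,K)\<in>p. x \<in> N}"
      define p1 where "p1 = p - p2"
      have p2p: "p2 \<subseteq> p" unfolding p2_def by auto
      have elem: "\<And>x K. (x,K) \<in> p \<Longrightarrow> K = {Inf K..Sup K} \<and> Inf K \<le> Sup K \<and> a \<le> Inf K \<and> Sup K \<le> b \<and> x \<in> K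
         \<and> cnt K = Sup K - Inf K \<and> interior K = {Inf K<..<Sup K}"
        using tdiv_elem[OF p] by blast
      have ba: "F b - F a = (\<Sum>(x,K)\<in>p. F (Sup K) - F (Inf K))"
        using additive_tagged_division_1[OF ab p, of F] by simp
      have bac: "(\<Sum>(x,K)\<in>p. cnt K) = b - a"
      proof -
        have "(\<Sum>(x,K)\<in>p. cnt K) = (\<Sum>(x,K)\<in>p. Sup K - Inf K)"
          by (rule sum.cong) (use elem in auto)
        also have "\<dots> = b - a" using additive_tagged_division_1[OF ab p, of "\<lambda>x. x"] by simp
        finally show ?thesis .
      qed
      define T where "T = (\<lambda>(x,K). cnt K * g x - (F (Sup K) - F (Inf K)))"
      have sumT: "(\<Sum>(x,k)\<in>p. cnt k *\<^sub>R g x) - (F b - F a) = sum T p"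
        unfolding ba T_def by (simp add: sum_subtractf[symmetric] split_def)
      have split: "sum T p = sum T p1 + sum T p2"
        unfolding p1_def using sum.subset_diff[OF p2p finp, of T] by simp
      have b1: "\<bar>sum T p1\<bar> \<le> e' * (b - a)"
      proof -
        have "\<bar>sum T p1\<bar> \<le> (\<Sum>(x,K)\<in>p1. e' * cnt K)"
        proof -
          have "\<bar>sum T p1\<bar> \<le> (\<Sum>xK\<in>p1. \<bar>T xK\<bar>)" by (rule sum_abs)
          also have "\<dots> \<le> (\<Sum>(x,K)\<in>p1. e' * cnt K)"
          proof (rule sum_mono)
            fix xK assume "xK \<in> p1"
            then obtain x K where xK: "xK = (x,K)" "(x,K) \<in> p" "x \<notin> N"
              unfolding p1_def p2_def by auto
            have E: "K = {Inf K..Sup K}" "Inf K \<le> Sup K" "a \<le> Inf K" "Sup K \<le> b" "x \<in> K" "cnt K = Sup K - Inf K"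
              using elem[OF xK(2)] by auto
            let ?u = "Inf K" and ?v = "Sup K"
            have xI: "Inf K \<le> x \<and> x \<le> Sup K" using E(1) E(5) by (metis atLeastAtMost_iff)
            have xab: "x \<in> {a..b} - N" using E(3,4) xI xK(3) by auto
            have ball: "\<forall>y\<in>K. y \<in> ball x (\<delta> x)" using fineD[OF f1 xK(2)] by blast
            have uK: "?u \<in> K" and vK: "?v \<in> K" using E by (metis atLeastAtMost_iff order_refl)+
            have h1: "norm (F ?u - F x - (?u-x) *\<^sub>R f x) \<le> e' * norm (?u-x)"
            proof (rule \<delta>P[OF xab])
              show "?u \<in> {a..b}" using E(2,3,4) by auto
              show "norm (?u - x) < \<delta> x" using ball uK by (simp add: dist_real_def) (metis abs_minus_commute)
            qed
            have h2: "norm (F ?v - F x - (?v-x) *\<^sub>R f x) \<le> e' * norm (?v-x)"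
            proof (rule \<delta>P[OF xab])
              show "?v \<in> {a..b}" using E(2,3,4) by auto
              show "norm (?v - x) < \<delta> x" using ball vK by (simp add: dist_real_def) (metis abs_minus_commute)
            qed
            have TxK: "T xK = cnt K * f x - (F ?v - F ?u)" unfolding T_def xK(1) g_def using xK(3) by simp
            have "\<bar>T xK\<bar> = \<bar>(F ?u - F x - (?u-x) * f x) - (F ?v - F x - (?v-x) * f x)\<bar>"
              unfolding TxK E(6) by (simp add: algebra_simps)
            also have "\<dots> \<le> e' * \<bar>?u - x\<bar> + e' * \<bar>?v - x\<bar>" using h1 h2 by simp
            also have "\<dots> = e' * cnt K" unfolding E(6) using xI by (simp add: algebra_simps)
            finally show "\<bar>T xK\<bar> \<le> (case xK of (x,K) \<Rightarrow> e' * cnt K)" using xK by simp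
          qed
          finally show ?thesis .
        qed
        also have "\<dots> \<le> (\<Sum>(x,K)\<in>p. e' * cnt K)"
          by (rule sum_mono2) (use finp e'0 elem in \<open>auto simp: p1_def\<close>)
        also have "\<dots> = e' * (b - a)" using bac by (simp add: sum_distrib_left[symmetric] split_def)
        finally show ?thesis .
      qed
      define p3 where "p3 = {(x,K)\<in>p2. Inf K < Sup K}"
      have p3p: "p3 \<subseteq> p" using p2p unfolding p3_def by auto
      have fin3: "finite p3" using p3p finp finite_subset by blast
      have b2: "\<bar>sum T p2\<bar> < e/2"
      proof -
        have "\<bar>sum T p2\<bar> \<le> (\<Sum>xK\<in>p2. \<bar>T xK\<bar>)" by (rule sum_abs)
        also have "\<dots> = (\<Sum>(x,K)\<in>p2. \<bar>F (Sup K) - F (Inf K)\<bar>)"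
          by (rule sum.cong) (auto simp: T_def g_def p2_def)
        also have "\<dots> = (\<Sum>(x,K)\<in>p3. \<bar>F (Sup K) - F (Inf K)\<bar>)"
        proof (rule sum.mono_neutral_right)
          show "finite p2" using p2p finp finite_subset by blast
          show "p3 \<subseteq> p2" unfolding p3_def by auto
          show "\<forall>i\<in>p2 - p3. (case i of (x, K) \<Rightarrow> \<bar>F (Sup K) - F (Inf K)\<bar>) = 0"
          proof
            fix i assume i: "i \<in> p2 - p3"
            then obtain x K where "i = (x,K)" "(x,K) \<in> p" "\<not> Inf K < Sup K" unfolding p3_def p2_def by auto
            then show "(case i of (x, K) \<Rightarrow> \<bar>F (Sup K) - F (Inf K)\<bar>) = 0" using elem by force
          qed
        qed
        also have "\<dots> = (\<Sum>K\<in>snd ` p3. \<bar>F (Sup K) - F (Inf K)\<bar>)"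
        proof -
          have inj: "inj_on snd p3"
          proof (rule inj_onI)
            fix i j assume i: "i \<in> p3" and j: "j \<in> p3" and eq: "snd i = snd j"
            show "i = j"
            proof (rule ccontr)
              assume ne: "i \<noteq> j"
              obtain x K where iK: "i = (x,K)" "(x,K) \<in> p" "Inf K < Sup K" using i unfolding p3_def p2_def by auto
              obtain y L where jL: "j = (y,L)" "(y,L) \<in> p" using j unfolding p3_def p2_def by auto
              have KL: "K = L" using eq iK jL by simp
              have "interior K \<inter> interior L = {}"
                using tagged_division_ofD(5)[OF p iK(2) jL(2)] ne iK jL by auto
              moreover have "interior K = {Inf K<..<Sup K}" using elem[OF iK(2)] by blast
              moreover have "(Inf K + Sup K)/2 \<in> {Inf K<..<Sup K}" using iK(3) by auto
              ultimately show False using KL by auto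
            qed
          qed
          show ?thesis using sum.reindex[OF inj, of "\<lambda>K. \<bar>F (Sup K) - F (Inf K)\<bar>"] by (simp add: split_def)
        qed
        also have "\<dots> < e/2"
        proof (rule dP)
          show "finite (snd ` p3)" using fin3 by simp
          show "\<forall>K\<in>snd ` p3. Inf K < Sup K \<and> a \<le> Inf K \<and> Sup K \<le> b"
            using elem unfolding p3_def p2_def by force
          show "\<forall>K\<in>snd ` p3. \<forall>L\<in>snd ` p3. K \<noteq> L \<longrightarrow> {Inf K<..<Sup K} \<inter> {Inf L<..<Sup L} = {}"
          proof (intro ballI impI)
            fix K L assume K: "K \<in> snd ` p3" and L: "L \<in> snd ` p3" and ne: "K \<noteq> L"
            obtain x where xK: "(x,K) \<in> p" using K p3p by force
            obtain y where yL: "(y,L) \<in> p" using L p3p by force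
            have "interior K \<inter> interior L = {}"
              using tagged_division_ofD(5)[OF p xK yL] ne by auto
            then show "{Inf K<..<Sup K} \<inter> {Inf L<..<Sup L} = {}" using elem[OF xK] elem[OF yL] by simp
          qed
          have "(\<Sum>K\<in>snd ` p3. Sup K - Inf K) = (\<Sum>(x,K)\<in>p3. Sup K - Inf K)"
          proof -
            have inj: "inj_on snd p3"
            proof (rule inj_onI)
              fix i j assume i: "i \<in> p3" and j: "j \<in> p3" and eq: "snd i = snd j"
              show "i = j"
              proof (rule ccontr)
                assume ne: "i \<noteq> j"
                obtain x K where iK: "i = (x,K)" "(x,K) \<in> p" "Inf K < Sup K" using i unfolding p3_def p2_def by auto
                obtain y L where jL: "j = (y,L)" "(y,L) \<in> p" using j unfolding p3_def p2_def by auto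
                have KL: "K = L" using eq iK jL by simp
                have "interior K \<inter> interior L = {}"
                  using tagged_division_ofD(5)[OF p iK(2) jL(2)] ne iK jL by auto
                moreover have "interior K = {Inf K<..<Sup K}" using elem[OF iK(2)] by blast
                moreover have "(Inf K + Sup K)/2 \<in> {Inf K<..<Sup K}" using iK(3) by auto
                ultimately show False using KL by auto
              qed
            qed
            show ?thesis using sum.reindex[OF inj, of "\<lambda>K. Sup K - Inf K"] by (simp add: split_def)
          qed
          also have "\<dots> \<le> (\<Sum>(x,K)\<in>p. cnt K * indicator N x)"
          proof -
            have "(\<Sum>(x,K)\<in>p3. Sup K - Inf K) = (\<Sum>(x,K)\<in>p3. cnt K * indicator N x)"
              by (rule sum.cong) (use elem in \<open>auto simp: p3_def p2_def\<close>)
            also have "\<dots> \<le> (\<Sum>(x,K)\<in>p. cnt K * indicator N x)"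
              by (rule sum_mono2) (use finp p3p in \<open>auto simp: split_def\<close>)
            finally show ?thesis .
          qed
          also have "\<dots> < d" using g1P[OF p f2] by (simp add: split_def)
          finally show "(\<Sum>K\<in>snd ` p3. Sup K - Inf K) < d" .
        qed
        finally show ?thesis .
      qed
      have "e' * (b - a) < e / 2"
      proof -
        have "e' * (b - a) * 2 < e"
          unfolding e'_def using e ab by (simp add: field_simps)
        then show ?thesis by simp
      qed
      then show "norm (sum (\<lambda>(x,k). cnt k *\<^sub>R g x) p - (F b - F a)) < e"
        using sumT split b1 b2 by simp
    qed
  qed
  then show ?thesis
    by (rule has_integral_spike[OF N, rotated]) (simp add: g_def)
qed

lemma ftc_ac_sub:
  fixes F f :: "real \<Rightarrow> real"
  assumes cd: "a \<le> c" "c \<le> d" "d \<le> b" and ac: "abs_cont_on a b F"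
    and der: "AE x in lebesgue_on {a..b}. (F has_real_derivative f x) (at x within {a..b})"
  shows "(f has_integral (F d - F c)) {c..d}"
proof -
  obtain N where NP: "{x \<in> space (lebesgue_on {a..b}). \<not> (F has_real_derivative f x) (at x within {a..b})} \<subseteq> N"
    and N1: "emeasure (lebesgue_on {a..b}) N = 0" and N2: "N \<in> sets (lebesgue_on {a..b})"
    by (rule AE_E[OF der]) blast
  have N: "N \<in> null_sets (lebesgue_on {a..b})" using N1 N2 by (simp add: null_sets_def)
  have "N \<in> null_sets lebesgue" using N by (simp add: null_sets_restrict_space)
  then have negl: "negligible N" by (simp add: negligible_iff_null_sets)
  have acc: "abs_cont_on c d F"
    unfolding abs_cont_on_def
  proof (intro allI impI)
    fix e :: real assume "e > 0"
    then obtain dd where "dd > 0" and P: "\<forall>(m::nat) (u::nat \<Rightarrow> real) v.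
        (\<forall>i<m. a \<le> u i \<and> u i \<le> v i \<and> v i \<le> b) \<and>
        (\<forall>i<m. \<forall>j<m. i \<noteq> j \<longrightarrow> v i \<le> u j \<or> v j \<le> u i) \<and>
        (\<Sum>i<m. v i - u i) < dd \<longrightarrow> (\<Sum>i<m. \<bar>F (v i) - F (u i)\<bar>) < e"
      using ac[unfolded abs_cont_on_def, rule_format, OF \<open>e > 0\<close>] by blast
    show "\<exists>dd>0. \<forall>(m::nat) (u::nat \<Rightarrow> real) v.
        (\<forall>i<m. c \<le> u i \<and> u i \<le> v i \<and> v i \<le> d) \<and>
        (\<forall>i<m. \<forall>j<m. i \<noteq> j \<longrightarrow> v i \<le> u j \<or> v j \<le> u i) \<and>
        (\<Sum>i<m. v i - u i) < dd \<longrightarrow> (\<Sum>i<m. \<bar>F (v i) - F (u i)\<bar>) < e"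
    proof (intro exI[of _ dd] conjI allI impI)
      show "dd > 0" by fact
      fix m :: nat and u v :: "nat \<Rightarrow> real"
      assume H: "(\<forall>i<m. c \<le> u i \<and> u i \<le> v i \<and> v i \<le> d) \<and>
        (\<forall>i<m. \<forall>j<m. i \<noteq> j \<longrightarrow> v i \<le> u j \<or> v j \<le> u i) \<and> (\<Sum>i<m. v i - u i) < dd"
      have "\<forall>i<m. a \<le> u i \<and> u i \<le> v i \<and> v i \<le> b" using H cd by force
      then show "(\<Sum>i<m. \<bar>F (v i) - F (u i)\<bar>) < e" using P H by blast
    qed
  qed
  show ?thesis
  proof (rule ftc_ac_negl[OF cd(2) acc negl])
    fix x assume x: "x \<in> {c..d} - N"
    then have "x \<in> {a..b}" using cd by auto
    then have "(F has_real_derivative f x) (at x within {a..b})" using NP x by auto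
    then show "(F has_real_derivative f x) (at x within {c..d})"
      by (rule DERIV_subset) (use cd in auto)
  qed
qed

lemma ac_cont:
  assumes ac: "abs_cont_on a b F"
  shows "continuous_on {a..b} F"
  unfolding continuous_on_iff
proof (intro ballI allI impI)
  fix x e :: real assume x: "x \<in> {a..b}" and e: "e > 0"
  then obtain dd where dd: "dd > 0" and P: "\<forall>(m::nat) (u::nat \<Rightarrow> real) v.
        (\<forall>i<m. a \<le> u i \<and> u i \<le> v i \<and> v i \<le> b) \<and>
        (\<forall>i<m. \<forall>j<m. i \<noteq> j \<longrightarrow> v i \<le> u j \<or> v j \<le> u i) \<and>
        (\<Sum>i<m. v i - u i) < dd \<longrightarrow> (\<Sum>i<m. \<bar>F (v i) - F (u i)\<bar>) < e"
    using ac[unfolded abs_cont_on_def, rule_format, OF e] by blast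
  show "\<exists>d>0. \<forall>x'\<in>{a..b}. dist x' x < d \<longrightarrow> dist (F x') (F x) < e"
  proof (intro exI[of _ dd] conjI ballI impI)
    show "dd > 0" by fact
    fix y assume y: "y \<in> {a..b}" and dy: "dist y x < dd"
    have "(\<Sum>i<(1::nat). \<bar>F ((\<lambda>_. max x y) i) - F ((\<lambda>_. min x y) i)\<bar>) < e"
    proof -
      have "max x y - min x y = \<bar>y - x\<bar>" by auto
      then show ?thesis using P[rule_format, of 1 "\<lambda>_. min x y" "\<lambda>_. max x y"] x y dy
        by (auto simp: dist_real_def)
    qed
    then show "dist (F y) (F x) < e"
      by (auto simp: dist_real_def max_def min_def abs_minus_commute split: if_splits)
  qed
qed

lemma cont_bounded:
  assumes "continuous_on {a..b::real} (F::real \<Rightarrow> real)"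
  obtains B where "B \<ge> 0" "\<And>x. x \<in> {a..b} \<Longrightarrow> \<bar>F x\<bar> \<le> B"
proof -
  have "compact (F ` {a..b})" using assms compact_continuous_image compact_Icc by blast
  then obtain B where B: "\<forall>y\<in>F ` {a..b}. norm y \<le> B" using compact_imp_bounded[of "F ` {a..b}"] unfolding bounded_iff by blast
  show ?thesis
  proof (rule that[of "max B 0"])
    fix x assume "x \<in> {a..b}"
    then have "norm (F x) \<le> B" using B by blast
    then show "\<bar>F x\<bar> \<le> max B 0" by simp
  qed simp
qed

lemma ac_lipschitz:
  assumes L: "\<And>x y. x \<in> {a..b} \<Longrightarrow> y \<in> {a..b} \<Longrightarrow> \<bar>F x - F y\<bar> \<le> L * \<bar>x - y\<bar>" and L0: "L \<ge> 0"
  shows "abs_cont_on a b F"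
  unfolding abs_cont_on_def
proof (intro allI impI)
  fix e :: real assume e: "e > 0"
  show "\<exists>dd>0. \<forall>(m::nat) (u::nat \<Rightarrow> real) v.
        (\<forall>i<m. a \<le> u i \<and> u i \<le> v i \<and> v i \<le> b) \<and>
        (\<forall>i<m. \<forall>j<m. i \<noteq> j \<longrightarrow> v i \<le> u j \<or> v j \<le> u i) \<and>
        (\<Sum>i<m. v i - u i) < dd \<longrightarrow> (\<Sum>i<m. \<bar>F (v i) - F (u i)\<bar>) < e"
  proof (intro exI[of _ "e / (L + 1)"] conjI allI impI)
    show "e / (L + 1) > 0" using e L0 by auto
    fix m :: nat and u v :: "nat \<Rightarrow> real"
    assume H: "(\<forall>i<m. a \<le> u i \<and> u i \<le> v i \<and> v i \<le> b) \<and>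
        (\<forall>i<m. \<forall>j<m. i \<noteq> j \<longrightarrow> v i \<le> u j \<or> v j \<le> u i) \<and> (\<Sum>i<m. v i - u i) < e / (L + 1)"
    have "(\<Sum>i<m. \<bar>F (v i) - F (u i)\<bar>) \<le> (\<Sum>i<m. L * (v i - u i))"
    proof (rule sum_mono)
      fix i assume "i \<in> {..<m}"
      then have "a \<le> u i" "u i \<le> v i" "v i \<le> b" using H by auto
      then show "\<bar>F (v i) - F (u i)\<bar> \<le> L * (v i - u i)" using L[of "v i" "u i"] by auto
    qed
    also have "\<dots> = L * (\<Sum>i<m. v i - u i)" by (simp add: sum_distrib_left)
    also have "\<dots> \<le> L * (e / (L + 1))" using H L0 by (intro mult_left_mono) auto
    also have "\<dots> < e" using e L0 by (simp add: field_simps)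
    finally show "(\<Sum>i<m. \<bar>F (v i) - F (u i)\<bar>) < e" .
  qed
qed

lemma ac_deriv:
  assumes der: "\<And>x. x \<in> {a..b} \<Longrightarrow> (F has_real_derivative F' x) (at x within {a..b})"
    and B: "\<And>x. x \<in> {a..b} \<Longrightarrow> \<bar>F' x\<bar> \<le> L" and L0: "L \<ge> 0"
  shows "abs_cont_on a b F"
proof (rule ac_lipschitz[OF _ L0])
  fix x y assume "x \<in> {a..b}" "y \<in> {a..b}"
  then show "\<bar>F x - F y\<bar> \<le> L * \<bar>x - y\<bar>"
    using field_differentiable_bound[of "{a..b}" F F' L x y] der B by auto
qed

lemma ac_deriv_cont:
  assumes der: "\<And>x. x \<in> {a..b} \<Longrightarrow> (F has_real_derivative F' x) (at x within {a..b})"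
    and c: "continuous_on {a..b} F'"
  shows "abs_cont_on a b F"
proof -
  obtain B where "B \<ge> 0" "\<And>x. x \<in> {a..b} \<Longrightarrow> \<bar>F' x\<bar> \<le> B" using cont_bounded[OF c] by blast
  then show ?thesis using ac_deriv[OF der] by blast
qed

lemma ac_add:
  assumes f: "abs_cont_on a b f" and g: "abs_cont_on a b g"
  shows "abs_cont_on a b (\<lambda>x. f x + g x)"
  unfolding abs_cont_on_def
proof (intro allI impI)
  fix e :: real assume e: "e > 0"
  obtain d1 where d1: "d1 > 0" and P1: "\<forall>(m::nat) (u::nat \<Rightarrow> real) v.
        (\<forall>i<m. a \<le> u i \<and> u i \<le> v i \<and> v i \<le> b) \<and>
        (\<forall>i<m. \<forall>j<m. i \<noteq> j \<longrightarrow> v i \<le> u j \<or> v j \<le> u i) \<and>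
        (\<Sum>i<m. v i - u i) < d1 \<longrightarrow> (\<Sum>i<m. \<bar>f (v i) - f (u i)\<bar>) < e/2"
    using f[unfolded abs_cont_on_def, rule_format, OF half_gt_zero[OF e]] by blast
  obtain d2 where d2: "d2 > 0" and P2: "\<forall>(m::nat) (u::nat \<Rightarrow> real) v.
        (\<forall>i<m. a \<le> u i \<and> u i \<le> v i \<and> v i \<le> b) \<and>
        (\<forall>i<m. \<forall>j<m. i \<noteq> j \<longrightarrow> v i \<le> u j \<or> v j \<le> u i) \<and>
        (\<Sum>i<m. v i - u i) < d2 \<longrightarrow> (\<Sum>i<m. \<bar>g (v i) - g (u i)\<bar>) < e/2"
    using g[unfolded abs_cont_on_def, rule_format, OF half_gt_zero[OF e]] by blast
  show "\<exists>dd>0. \<forall>(m::nat) (u::nat \<Rightarrow> real) v.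
        (\<forall>i<m. a \<le> u i \<and> u i \<le> v i \<and> v i \<le> b) \<and>
        (\<forall>i<m. \<forall>j<m. i \<noteq> j \<longrightarrow> v i \<le> u j \<or> v j \<le> u i) \<and>
        (\<Sum>i<m. v i - u i) < dd \<longrightarrow> (\<Sum>i<m. \<bar>(f (v i) + g (v i)) - (f (u i) + g (u i))\<bar>) < e"
  proof (intro exI[of _ "min d1 d2"] conjI allI impI)
    show "min d1 d2 > 0" using d1 d2 by auto
    fix m :: nat and u v :: "nat \<Rightarrow> real"
    assume H: "(\<forall>i<m. a \<le> u i \<and> u i \<le> v i \<and> v i \<le> b) \<and>
        (\<forall>i<m. \<forall>j<m. i \<noteq> j \<longrightarrow> v i \<le> u j \<or> v j \<le> u i) \<and> (\<Sum>i<m. v i - u i) < min d1 d2"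
    have A: "(\<Sum>i<m. \<bar>f (v i) - f (u i)\<bar>) < e/2" using P1 H by auto
    have B: "(\<Sum>i<m. \<bar>g (v i) - g (u i)\<bar>) < e/2" using P2 H by auto
    have "(\<Sum>i<m. \<bar>(f (v i) + g (v i)) - (f (u i) + g (u i))\<bar>) \<le>
          (\<Sum>i<m. \<bar>f (v i) - f (u i)\<bar> + \<bar>g (v i) - g (u i)\<bar>)"
      by (rule sum_mono) linarith
    also have "\<dots> < e" using A B by (simp add: sum.distrib)
    finally show "(\<Sum>i<m. \<bar>(f (v i) + g (v i)) - (f (u i) + g (u i))\<bar>) < e" .
  qed
qed

lemma ac_mult:
  assumes f: "abs_cont_on a b f" and g: "abs_cont_on a b g"
  shows "abs_cont_on a b (\<lambda>x. f x * g x)"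
  unfolding abs_cont_on_def
proof (intro allI impI)
  fix e :: real assume e: "e > 0"
  obtain Bf where Bf0: "Bf \<ge> 0" and Bf: "\<And>x. x \<in> {a..b} \<Longrightarrow> \<bar>f x\<bar> \<le> Bf"
    using cont_bounded[OF ac_cont[OF f]] by blast
  obtain Bg where Bg0: "Bg \<ge> 0" and Bg: "\<And>x. x \<in> {a..b} \<Longrightarrow> \<bar>g x\<bar> \<le> Bg"
    using cont_bounded[OF ac_cont[OF g]] by blast
  have e1: "e / (2 * (Bg + 1)) > 0" and e2: "e / (2 * (Bf + 1)) > 0" using e Bf0 Bg0 by auto
  obtain d1 where d1: "d1 > 0" and P1: "\<forall>(m::nat) (u::nat \<Rightarrow> real) v.
        (\<forall>i<m. a \<le> u i \<and> u i \<le> v i \<and> v i \<le> b) \<and>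
        (\<forall>i<m. \<forall>j<m. i \<noteq> j \<longrightarrow> v i \<le> u j \<or> v j \<le> u i) \<and>
        (\<Sum>i<m. v i - u i) < d1 \<longrightarrow> (\<Sum>i<m. \<bar>f (v i) - f (u i)\<bar>) < e / (2 * (Bg + 1))"
    using f[unfolded abs_cont_on_def, rule_format, OF e1] by blast
  obtain d2 where d2: "d2 > 0" and P2: "\<forall>(m::nat) (u::nat \<Rightarrow> real) v.
        (\<forall>i<m. a \<le> u i \<and> u i \<le> v i \<and> v i \<le> b) \<and>
        (\<forall>i<m. \<forall>j<m. i \<noteq> j \<longrightarrow> v i \<le> u j \<or> v j \<le> u i) \<and>
        (\<Sum>i<m. v i - u i) < d2 \<longrightarrow> (\<Sum>i<m. \<bar>g (v i) - g (u i)\<bar>) < e / (2 * (Bf + 1))"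
    using g[unfolded abs_cont_on_def, rule_format, OF e2] by blast
  show "\<exists>dd>0. \<forall>(m::nat) (u::nat \<Rightarrow> real) v.
        (\<forall>i<m. a \<le> u i \<and> u i \<le> v i \<and> v i \<le> b) \<and>
        (\<forall>i<m. \<forall>j<m. i \<noteq> j \<longrightarrow> v i \<le> u j \<or> v j \<le> u i) \<and>
        (\<Sum>i<m. v i - u i) < dd \<longrightarrow> (\<Sum>i<m. \<bar>f (v i) * g (v i) - f (u i) * g (u i)\<bar>) < e"
  proof (intro exI[of _ "min d1 d2"] conjI allI impI)
    show "min d1 d2 > 0" using d1 d2 by auto
    fix m :: nat and u v :: "nat \<Rightarrow> real"
    assume H: "(\<forall>i<m. a \<le> u i \<and> u i \<le> v i \<and> v i \<le> b) \<and>
        (\<forall>i<m. \<forall>j<m. i \<noteq> j \<longrightarrow> v i \<le> u j \<or> v j \<le> u i) \<and> (\<Sum>i<m. v i - u i) < min d1 d2"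
    have A: "(\<Sum>i<m. \<bar>f (v i) - f (u i)\<bar>) < e / (2 * (Bg + 1))" using P1 H by auto
    have B: "(\<Sum>i<m. \<bar>g (v i) - g (u i)\<bar>) < e / (2 * (Bf + 1))" using P2 H by auto
    have "(\<Sum>i<m. \<bar>f (v i) * g (v i) - f (u i) * g (u i)\<bar>) \<le>
          (\<Sum>i<m. Bg * \<bar>f (v i) - f (u i)\<bar> + Bf * \<bar>g (v i) - g (u i)\<bar>)"
    proof (rule sum_mono)
      fix i assume "i \<in> {..<m}"
      then have ab: "u i \<in> {a..b}" "v i \<in> {a..b}" using H by auto
      have "f (v i) * g (v i) - f (u i) * g (u i) = (f (v i) - f (u i)) * g (v i) + f (u i) * (g (v i) - g (u i))"
        by (simp add: algebra_simps)
      then have "\<bar>f (v i) * g (v i) - f (u i) * g (u i)\<bar> \<le> \<bar>f (v i) - f (u i)\<bar> * \<bar>g (v i)\<bar> + \<bar>f (u i)\<bar> * \<bar>g (v i) - g (u i)\<bar>"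
        using abs_triangle_ineq[of "(f (v i) - f (u i)) * g (v i)" "f (u i) * (g (v i) - g (u i))"] by (simp add: abs_mult)
      also have "\<dots> \<le> \<bar>f (v i) - f (u i)\<bar> * Bg + Bf * \<bar>g (v i) - g (u i)\<bar>"
        by (intro add_mono mult_left_mono mult_right_mono Bf Bg ab) auto
      finally show "\<bar>f (v i) * g (v i) - f (u i) * g (u i)\<bar> \<le> Bg * \<bar>f (v i) - f (u i)\<bar> + Bf * \<bar>g (v i) - g (u i)\<bar>"
        by (simp add: mult.commute)
    qed
    also have "\<dots> = Bg * (\<Sum>i<m. \<bar>f (v i) - f (u i)\<bar>) + Bf * (\<Sum>i<m. \<bar>g (v i) - g (u i)\<bar>)"
      by (simp add: sum.distrib sum_distrib_left)
    also have "\<dots> \<le> Bg * (e / (2 * (Bg + 1))) + Bf * (e / (2 * (Bf + 1)))"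
      using A B Bf0 Bg0 by (intro add_mono mult_left_mono) auto
    also have "\<dots> < e"
    proof -
      have "Bg * (e / (2 * (Bg + 1))) < e/2" using Bg0 e by (simp add: field_simps)
      moreover have "Bf * (e / (2 * (Bf + 1))) < e/2" using Bf0 e by (simp add: field_simps)
      ultimately show ?thesis by linarith
    qed
    finally show "(\<Sum>i<m. \<bar>f (v i) * g (v i) - f (u i) * g (u i)\<bar>) < e" .
  qed
qed

lemma ac_const: "abs_cont_on a b (\<lambda>x. c)"
  by (rule ac_lipschitz[of a b _ 0]) auto

lemma ac_sum:
  assumes "finite I" "\<And>i. i \<in> I \<Longrightarrow> abs_cont_on a b (f i)"
  shows "abs_cont_on a b (\<lambda>x. \<Sum>i\<in>I. f i x)"
  using assms
proof (induction I rule: finite_induct)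
  case empty then show ?case using ac_const[of a b 0] by simp
next
  case (insert j I)
  then show ?case using ac_add[of a b "f j" "\<lambda>x. \<Sum>i\<in>I. f i x"] by simp
qed

definition ccoef :: "nat \<Rightarrow> nat \<Rightarrow> real" where
  "ccoef n k = real ((n + k + 1) choose (2 * k + 1)) * 2 ^ k"

definition pd :: "(nat \<Rightarrow> real) \<Rightarrow> nat \<Rightarrow> nat \<Rightarrow> real \<Rightarrow> real" where
  "pd c n j y = (\<Sum>k\<in>{j..n}. c k * (fact k / fact (k - j)) * (y - 1) ^ (k - j))"

definition U :: "nat \<Rightarrow> real \<Rightarrow> real" where
  "U n y = pd (ccoef n) n 0 y"

lemma pd_deriv: "(pd c n j has_real_derivative pd c n (Suc j) y) (at y)"
proof -
  have D: "((\<lambda>y. pd c n j y) has_real_derivative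
     (\<Sum>k\<in>{j..n}. c k * (fact k / fact (k - j)) * (real (k - j) * (y - 1) ^ (k - j - 1)))) (at y)"
    unfolding pd_def
    by (rule DERIV_sum) (auto intro!: derivative_eq_intros)
  have "(\<Sum>k\<in>{j..n}. c k * (fact k / fact (k - j)) * (real (k - j) * (y - 1) ^ (k - j - 1)))
      = (\<Sum>k\<in>{Suc j..n}. c k * (fact k / fact (k - j)) * (real (k - j) * (y - 1) ^ (k - j - 1)))"
    by (rule sum.mono_neutral_right) auto
  also have "\<dots> = pd c n (Suc j) y"
    unfolding pd_def
  proof (rule sum.cong)
    fix k assume "k \<in> {Suc j..n}"
    then have k: "k - j = Suc (k - Suc j)" by auto
    have F: "(fact (Suc (k - Suc j))::real) = real (Suc (k - Suc j)) * fact (k - Suc j)"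
      by (rule fact_Suc)
    have G: "\<And>s A B C::real. s \<noteq> 0 \<Longrightarrow> A / (s * B) * (s * C) = A / B * C"
      by (auto simp: field_simps)
    show "c k * (fact k / fact (k - j)) * (real (k - j) * (y - 1) ^ (k - j - 1)) =
          c k * (fact k / fact (k - Suc j)) * (y - 1) ^ (k - Suc j)"
      unfolding k F diff_Suc_1 using G[of "real (Suc (k - Suc j))" "fact k" "fact (k - Suc j)" "(y - 1) ^ (k - Suc j)"]
      by (simp only: mult.assoc of_nat_eq_0_iff nat.simps(3) not_False_eq_True)
  qed simp
  finally show ?thesis using D by simp
qed

lemma pd_at1: "j \<le> n \<Longrightarrow> pd c n j 1 = c j * fact j"
proof -
  assume jn: "j \<le> n"
  have "pd c n j 1 = (\<Sum>k\<in>{j}. c k * (fact k / fact (k - j)) * (1 - 1) ^ (k - j))"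
    unfolding pd_def by (rule sum.mono_neutral_right) (use jn in auto)
  then show ?thesis by simp
qed

lemma pd_top: "pd c n n y = c n * fact n"
  unfolding pd_def by simp

lemma ccoef_zero: "n < k \<Longrightarrow> ccoef n k = 0"
  unfolding ccoef_def by (simp add: binomial_eq_0 del: binomial_Suc_Suc)

lemma U_expand: "n \<le> M \<Longrightarrow> U n y = (\<Sum>k\<le>M. ccoef n k * (y - 1) ^ k)"
proof -
  assume nM: "n \<le> M"
  have "U n y = (\<Sum>k\<in>{0..n}. ccoef n k * (y - 1) ^ k)"
    unfolding U_def pd_def by simp
  also have "\<dots> = (\<Sum>k\<le>M. ccoef n k * (y - 1) ^ k)"
    by (rule sum.mono_neutral_left) (use nM in \<open>auto simp: ccoef_zero\<close>)
  finally show ?thesis .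
qed

lemma U0: "U 0 y = 1"
  by (simp add: U_def pd_def ccoef_def)

lemma U1: "U (Suc 0) y = 2 * y"
  by (simp add: U_def pd_def ccoef_def algebra_simps)

lemma binom_id: "(Suc (Suc m) choose Suc (Suc r)) + (m choose Suc (Suc r)) =
    2 * (Suc m choose Suc (Suc r)) + (m choose r)"
  by (simp add: binomial_Suc_Suc)

lemma binom_id': "((m+2) choose (r+2)) + (m choose (r+2)) = 2 * ((m+1) choose (r+2)) + (m choose r)"
proof -
  have e: "m+2 = Suc (Suc m)" "r+2 = Suc (Suc r)" "m+1 = Suc m" by auto
  show ?thesis unfolding e by (rule binom_id)
qed

lemma ccoef_rec: "ccoef (n+2) k = 2 * ccoef (n+1) k + 2 * (if k = 0 then 0 else ccoef (n+1) (k - 1)) - ccoef n k"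
proof (cases k)
  case 0 then show ?thesis by (simp add: ccoef_def)
next
  case (Suc k')
  have B: "real ((n + k' + 4) choose (2*k'+3)) + real ((n+k'+2) choose (2*k'+3)) =
      2 * real ((n+k'+3) choose (2*k'+3)) + real ((n+k'+2) choose (2*k'+1))"
  proof -
    have e: "(n + k' + 4) = (n+k'+2) + 2" "2*k'+3 = (2*k'+1) + 2" "n+k'+3 = (n+k'+2) + 1" by auto
    have "((n + k' + 4) choose (2*k'+3)) + ((n+k'+2) choose (2*k'+3)) =
      2 * ((n+k'+3) choose (2*k'+3)) + ((n+k'+2) choose (2*k'+1))"
      unfolding e by (rule binom_id')
    then show ?thesis by (metis of_nat_add of_nat_mult of_nat_numeral)
  qed
  have i: "n+2+k+1 = n+k'+4" "2*k+1 = 2*k'+3" "n+1+k+1 = n+k'+3" "n+1+(k-1)+1 = n+k'+2"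
     "2*(k-1)+1 = 2*k'+1" "n+k+1 = n+k'+2" "k - 1 = k'" "n+1+k'+1 = n+k'+2" using Suc by auto
  have e1: "ccoef (n+2) k = real ((n + k' + 4) choose (2*k'+3)) * 2^(Suc k')"
    unfolding ccoef_def i unfolding Suc ..
  have e2: "ccoef (n+1) k = real ((n + k' + 3) choose (2*k'+3)) * 2^(Suc k')"
    unfolding ccoef_def i unfolding Suc ..
  have e3: "ccoef (n+1) (k-1) = real ((n + k' + 2) choose (2*k'+1)) * 2^k'"
    unfolding ccoef_def i ..
  have e4: "ccoef n k = real ((n + k' + 2) choose (2*k'+3)) * 2^(Suc k')"
    unfolding ccoef_def i unfolding Suc ..
  have G: "A * 2^Suc k' + B'*2^Suc k' = 2*(C*2^Suc k') + 2*(D*2^k')" if h: "A + B' = 2*C + D" for A B' C D::real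
  proof -
    have "A * 2^Suc k' + B'*2^Suc k' = (A+B')*2^Suc k'" by (simp add: distrib_right)
    also have "\<dots> = (2*C+D)*2^Suc k'" using h by simp
    also have "\<dots> = 2*(C*2^Suc k') + 2*(D*2^k')" by (simp add: algebra_simps)
    finally show ?thesis .
  qed
  have "ccoef (n+2) k + ccoef n k = 2*ccoef (n+1) k + 2*ccoef (n+1) (k-1)"
    unfolding e1 e2 e3 e4 by (rule G[OF B])
  then show ?thesis using Suc by simp
qed

lemma U_rec: "U (n + 2) y = 2 * y * U (n + 1) y - U n y"
proof -
  let ?z = "y - 1"
  define M where "M = n + 2"
  have u2: "U (n+2) y = (\<Sum>k\<le>M. ccoef (n+2) k * ?z ^ k)" using U_expand[of "n+2" M] M_def by simp
  have u1: "U (n+1) y = (\<Sum>k\<le>M. ccoef (n+1) k * ?z ^ k)" using U_expand[of "n+1" M] M_def by simp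
  have u0: "U n y = (\<Sum>k\<le>M. ccoef n k * ?z ^ k)" using U_expand[of "n" M] M_def by simp
  have sh: "?z * (\<Sum>k\<le>M. ccoef (n+1) k * ?z ^ k) =
      (\<Sum>k\<le>M. (if k = 0 then 0 else ccoef (n+1) (k - 1)) * ?z ^ k)"
  proof -
    have "?z * (\<Sum>k\<le>M. ccoef (n+1) k * ?z ^ k) = (\<Sum>k\<le>M. ccoef (n+1) k * ?z ^ Suc k)"
      by (simp add: sum_distrib_left algebra_simps)
    also have "\<dots> = (\<Sum>k\<le>Suc M. (if k = 0 then 0 else ccoef (n+1) (k - 1)) * ?z ^ k)"
      by (subst sum.atMost_Suc_shift) simp
    also have "\<dots> = (\<Sum>k\<le>M. (if k = 0 then 0 else ccoef (n+1) (k - 1)) * ?z ^ k)"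
      using ccoef_zero[of "n+1" M] M_def by simp
    finally show ?thesis .
  qed
  have "2 * y * U (n + 1) y - U n y = 2 * U (n+1) y + 2 * (?z * U (n+1) y) - U n y"
    by (simp add: algebra_simps)
  also have "\<dots> = (\<Sum>k\<le>M. (2 * ccoef (n+1) k + 2 * (if k = 0 then 0 else ccoef (n+1) (k - 1)) - ccoef n k) * ?z ^ k)"
    unfolding u1 u0 sh by (simp add: sum_distrib_left sum.distrib sum_subtractf algebra_simps)
  also have "\<dots> = U (n+2) y"
    unfolding u2 ccoef_rec[of n] ..
  finally show ?thesis by simp
qed

lemma U_sym: "U n (-y) = (-1) ^ n * U n y"
proof (induction n rule: less_induct)
  case (less n)
  show ?case
  proof (cases n)
    case 0 then show ?thesis by (simp add: U0)
  next
    case (Suc m)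
    show ?thesis
    proof (cases m)
      case 0 then show ?thesis using Suc by (simp add: U1)
    next
      case (Suc k)
      have n: "n = k + 2" using Suc \<open>n = Suc m\<close> by simp
      have "U n (-y) = 2 * (-y) * U (k+1) (-y) - U k (-y)" unfolding n by (rule U_rec)
      also have "\<dots> = 2 * (-y) * ((-1)^(k+1) * U (k+1) y) - (-1)^k * U k y"
        using less.IH[of "k+1"] less.IH[of k] n by simp
      also have "\<dots> = (-1)^n * (2 * y * U (k+1) y - U k y)" unfolding n by (simp add: algebra_simps)
      also have "\<dots> = (-1)^n * U n y" unfolding n using U_rec[of k y] by simp
      finally show ?thesis .
    qed
  qed
qed

lemma U_trig: "U n (cos t) * sin t = sin (real (n + 1) * t)"
proof (induction n rule: less_induct)
  case (less n)
  show ?case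
  proof (cases n)
    case 0 then show ?thesis by (simp add: U0)
  next
    case (Suc m)
    show ?thesis
    proof (cases m)
      case 0 then show ?thesis using Suc by (simp add: U1 sin_double)
    next
      case (Suc k)
      have n: "n = k + 2" using Suc \<open>n = Suc m\<close> by simp
      have "U n (cos t) * sin t = 2 * cos t * (U (k+1) (cos t) * sin t) - U k (cos t) * sin t"
        unfolding n U_rec by (simp add: algebra_simps)
      also have "\<dots> = 2 * cos t * sin (real (k + 2) * t) - sin (real (k+1) * t)"
        using less.IH[of "k+1"] less.IH[of k] n by (simp add: add.commute)
      also have "\<dots> = sin (real (k + 3) * t)"
      proof -
        have a: "real (k+3) * t = real (k+2) * t + t" by (simp add: algebra_simps)
        have b: "real (k+1) * t = real (k+2) * t - t" by (simp add: algebra_simps)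
        show ?thesis unfolding a b sin_add sin_diff by (simp add: algebra_simps)
      qed
      finally show ?thesis unfolding n by (simp add: add.commute)
    qed
  qed
qed

lemma pd_sym: "pd (ccoef n) n j (-y) = (-1) ^ (n + j) * pd (ccoef n) n j y"
proof (induction j arbitrary: y)
  case 0
  then show ?case using U_sym[of n y] by (simp add: U_def)
next
  case (Suc j)
  have d1: "((\<lambda>y. pd (ccoef n) n j (-y)) has_real_derivative - pd (ccoef n) n (Suc j) (-y)) (at y)"
    using pd_deriv[of "ccoef n" n j "-y"] DERIV_mirror by blast
  have d2: "((\<lambda>y. (-1) ^ (n + j) * pd (ccoef n) n j y) has_real_derivative (-1) ^ (n + j) * pd (ccoef n) n (Suc j) y) (at y)"
    using pd_deriv[of "ccoef n" n j y] by (auto intro: DERIV_cmult)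
  have "(\<lambda>y. pd (ccoef n) n j (-y)) = (\<lambda>y. (-1) ^ (n + j) * pd (ccoef n) n j y)"
    using Suc.IH by blast
  then have "- pd (ccoef n) n (Suc j) (-y) = (-1) ^ (n + j) * pd (ccoef n) n (Suc j) y"
    using d1 d2 DERIV_unique by metis
  then show ?case by simp
qed

lemma sin_piece:
  fixes m :: real and k :: nat
  assumes m: "m > 0" and t: "t \<in> {real k * pi / m .. real (Suc k) * pi / m}"
  shows "\<bar>sin (m * t)\<bar> = (-1) ^ k * sin (m * t)"
proof -
  define s where "s = m * t - real k * pi"
  have s0: "0 \<le> s" and s1: "s \<le> pi"
  proof -
    have "real k * pi \<le> m * t" using t m by (auto simp: field_simps)
    then show "0 \<le> s" unfolding s_def by simp
    have "m * t \<le> real (Suc k) * pi" using t m by (auto simp: field_simps)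
    then show "s \<le> pi" unfolding s_def by (simp add: algebra_simps)
  qed
  have "sin (m * t) = sin (s + real k * pi)" unfolding s_def by simp
  also have "\<dots> = (-1) ^ k * sin s" by (simp add: sin_add)
  finally have E: "sin (m * t) = (-1) ^ k * sin s" .
  have "sin s \<ge> 0" using sin_ge_zero[OF s0 s1] .
  then show ?thesis unfolding E by (simp add: abs_mult)
qed

lemma int_abs_sin_pieces:
  fixes m :: real
  assumes m: "m > 0"
  shows "((\<lambda>t. \<bar>sin (m * t)\<bar>) has_integral (2 * real k / m)) {0 .. real k * pi / m}"
proof (induction k)
  case 0
  then show ?case by (simp add: has_integral_refl)
next
  case (Suc k)
  define G where "G t = - ((-1) ^ k * cos (m * t) / m)" for t
  have der: "(G has_real_derivative (-1) ^ k * sin (m * t)) (at t within X)" for t X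
    unfolding G_def using m by (auto intro!: derivative_eq_intros)
  have lek: "real k * pi / m \<le> real (Suc k) * pi / m"
    using m by (intro divide_right_mono mult_right_mono) auto
  have "((\<lambda>t. (-1) ^ k * sin (m * t)) has_integral (G (real (Suc k) * pi / m) - G (real k * pi / m)))
      {real k * pi / m .. real (Suc k) * pi / m}"
    using fundamental_theorem_of_calculus[OF lek, of G "\<lambda>t. (-1) ^ k * sin (m * t)"] der
    by (simp add: has_real_derivative_iff_has_vector_derivative[symmetric])
  moreover have "G (real (Suc k) * pi / m) - G (real k * pi / m) = 2 / m"
  proof -
    have "m * (real (Suc k) * pi / m) = real (Suc k) * pi" using m by (simp del: of_nat_Suc)
    then have c1: "cos (m * (real (Suc k) * pi / m)) = (-1) ^ Suc k" using cos_npi[of "Suc k"] by (simp only:)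
    have c2: "cos (m * (real k * pi / m)) = (-1) ^ k" using m by simp
    show ?thesis unfolding G_def c1 c2 by (simp add: field_simps)
  qed
  ultimately have calc: "((\<lambda>t. (-1) ^ k * sin (m * t)) has_integral (2 / m)) {real k * pi / m .. real (Suc k) * pi / m}"
    by simp
  have piece: "((\<lambda>t. \<bar>sin (m * t)\<bar>) has_integral (2 / m)) {real k * pi / m .. real (Suc k) * pi / m}"
  proof (rule has_integral_eq[OF _ calc])
    fix t assume "t \<in> {real k * pi / m .. real (Suc k) * pi / m}"
    then show "(-1) ^ k * sin (m * t) = \<bar>sin (m * t)\<bar>" using sin_piece[OF m] by simp
  qed
  have z: "0 \<le> real k * pi / m" using m by simp
  have "((\<lambda>t. \<bar>sin (m * t)\<bar>) has_integral (2 * real k / m + 2 / m)) {0 .. real (Suc k) * pi / m}"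
    by (rule has_integral_combine[OF z lek Suc.IH piece])
  moreover have "2 * real k / m + 2 / m = 2 * real (Suc k) / m" by (simp add: add_divide_distrib[symmetric] algebra_simps)
  ultimately show ?case by simp
qed

lemma int_abs_sin:
  "((\<lambda>t. \<bar>sin (real (Suc n) * t)\<bar>) has_integral 2) {0 .. pi}"
proof -
  have h: "((\<lambda>t. \<bar>sin (real (Suc n) * t)\<bar>) has_integral (2 * real (Suc n) / real (Suc n))) {0 .. real (Suc n) * pi / real (Suc n)}"
    by (rule int_abs_sin_pieces) simp
  have e1: "2 * real (Suc n) / real (Suc n) = 2" "real (Suc n) * pi / real (Suc n) = pi"
    by (simp_all del: of_nat_Suc)
  show ?thesis using h unfolding e1 .
qed

lemma pd_cont: "continuous_on S (pd c n j)"
  unfolding pd_def by (intro continuous_intros)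

lemma U_cont: "continuous_on S (U n)"
  unfolding U_def by (rule pd_cont)

lemma int_abs_U: "((\<lambda>y. \<bar>U n y\<bar>) has_integral 2) {-1..1}"
proof -
  have cont: "continuous_on {-1..1} (\<lambda>y. \<bar>U n y\<bar>)"
    using U_cont by (intro continuous_intros)
  have sub: "cos ` {0..pi} \<subseteq> {-1..1}" by auto
  have "((\<lambda>x. (- sin x) *\<^sub>R \<bar>U n (cos x)\<bar>) has_integral
     (integral {cos 0..cos pi} (\<lambda>y. \<bar>U n y\<bar>) - integral {cos pi..cos 0} (\<lambda>y. \<bar>U n y\<bar>))) {0..pi}"
  proof (rule has_integral_substitution_general[where s="{}" and a=0 and b=pi and g=cos and c="-1" and d=1
        and f="\<lambda>y. \<bar>U n y\<bar>" and g'="\<lambda>x. - sin x"])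
    show "continuous_on {-1..1} (\<lambda>y. \<bar>U n y\<bar>)" by (rule cont)
    show "cos ` {0..pi} \<subseteq> {-1..1}" by (rule sub)
    show "continuous_on {0..pi} cos" by (rule continuous_on_cos[OF continuous_on_id])
    fix x show "(cos has_real_derivative - sin x) (at x within {0..pi})"
      by (rule DERIV_subset[OF DERIV_cos]) simp
  qed auto
  then have A: "((\<lambda>x. - sin x * \<bar>U n (cos x)\<bar>) has_integral (- integral {-1..1} (\<lambda>y. \<bar>U n y\<bar>))) {0..pi}"
    by simp
  have "((\<lambda>x. - \<bar>sin (real (Suc n) * x)\<bar>) has_integral (- integral {-1..1} (\<lambda>y. \<bar>U n y\<bar>))) {0..pi}"
  proof (rule has_integral_eq[OF _ A])
    fix x assume "x \<in> {0..pi}"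
    then have "sin x \<ge> 0" using sin_ge_zero by auto
    then have "sin x * \<bar>U n (cos x)\<bar> = \<bar>U n (cos x) * sin x\<bar>" by (simp add: abs_mult)
    also have "\<dots> = \<bar>sin (real (Suc n) * x)\<bar>" using U_trig[of n x] by simp
    finally show "- sin x * \<bar>U n (cos x)\<bar> = - \<bar>sin (real (Suc n) * x)\<bar>" by simp
  qed
  then have "((\<lambda>x. - (- \<bar>sin (real (Suc n) * x)\<bar>)) has_integral - (- integral {-1..1} (\<lambda>y. \<bar>U n y\<bar>))) {0..pi}"
    by (rule has_integral_neg)
  then have "((\<lambda>x. \<bar>sin (real (Suc n) * x)\<bar>) has_integral integral {-1..1} (\<lambda>y. \<bar>U n y\<bar>)) {0..pi}"
    by simp
  then have "integral {-1..1} (\<lambda>y. \<bar>U n y\<bar>) = 2"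
    by (rule has_integral_unique[OF _ int_abs_sin[of n]])
  moreover have "(\<lambda>y. \<bar>U n y\<bar>) integrable_on {-1..1}"
    by (rule integrable_continuous_real[OF cont])
  ultimately show ?thesis using integrable_integral by metis
qed

lemma U_at1: "U n 1 = real n + 1"
  unfolding U_def using pd_at1[of 0 n "ccoef n"] by (simp add: ccoef_def)

lemma U_zeros_finite: "finite {y \<in> {-1..1}. U n y = 0}"
proof -
  have "{y \<in> {-1..1}. U n y = 0} \<subseteq> (\<lambda>i::nat. cos (real i * pi / real (Suc n))) ` {0..Suc n}"
  proof
    fix y assume y: "y \<in> {y \<in> {-1..1}. U n y = 0}"
    define th where "th = arccos y"
    have th: "0 \<le> th" "th \<le> pi" "cos th = y" using y arccos_bounded[of y] unfolding th_def by auto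
    have y1: "y \<noteq> 1" using y U_at1[of n] by auto
    have ym1: "y \<noteq> -1" using y U_sym[of n 1] U_at1[of n] by auto
    have th0: "th \<noteq> 0" using th y1 by auto
    have thpi: "th \<noteq> pi" using th ym1 by auto
    have "sin (real (Suc n) * th) = 0" using U_trig[of n th] th y by simp
    then obtain i :: int where i: "real (Suc n) * th = of_int i * pi" using sin_zero_iff_int2 by blast
    have "0 < real (Suc n) * th" using th th0 by auto
    then have "0 < real_of_int i * pi" using i by simp
    then have "0 < real_of_int i" using pi_gt_zero by (simp add: zero_less_mult_iff)
    then have ipos: "i > 0" by simp
    have "real (Suc n) * th \<le> real (Suc n) * pi" using th by (intro mult_left_mono) auto
    then have A: "real_of_int i * pi \<le> real (Suc n) * pi" by (simp only: i)
    have "real_of_int i \<le> real (Suc n)" by (rule mult_right_le_imp_le[OF A pi_gt_zero])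
    then have ile: "i \<le> int (Suc n)" by linarith
    have "th = real (nat i) * pi / real (Suc n)" using i ipos by (simp add: field_simps)
    then have "y = cos (real (nat i) * pi / real (Suc n))" using th by simp
    moreover have "nat i \<in> {0..Suc n}" using ile by auto
    ultimately show "y \<in> (\<lambda>i::nat. cos (real i * pi / real (Suc n))) ` {0..Suc n}" by blast
  qed
  then show ?thesis using finite_subset by blast
qed

definition Pj :: "nat \<Rightarrow> real \<Rightarrow> real \<Rightarrow> nat \<Rightarrow> real \<Rightarrow> real" where
  "Pj n a b j t = ((b - a) ^ n / 4 ^ n) * (2 / (b - a)) ^ j * pd (ccoef n) n j ((2 * t - a - b) / (b - a))"

lemma Pj_deriv:
  assumes "a < b"
  shows "(Pj n a b j has_real_derivative Pj n a b (Suc j) t) (at t within S)"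
proof -
  have g0: "((\<lambda>t. 2 * t - a - b) has_real_derivative 2) (at t within S)"
    by (auto intro!: derivative_eq_intros)
  have g: "((\<lambda>t. (2 * t - a - b) / (b - a)) has_real_derivative 2 / (b - a)) (at t within S)"
    using DERIV_cdivide[OF g0, of "b - a"] by simp
  have "((\<lambda>t. pd (ccoef n) n j ((2 * t - a - b) / (b - a))) has_real_derivative
      pd (ccoef n) n (Suc j) ((2 * t - a - b) / (b - a)) * (2 / (b - a))) (at t within S)"
    by (rule DERIV_chain2[OF pd_deriv g])
  then have "((\<lambda>t. ((b - a) ^ n / 4 ^ n) * (2 / (b - a)) ^ j * pd (ccoef n) n j ((2 * t - a - b) / (b - a)))
     has_real_derivative ((b - a) ^ n / 4 ^ n) * (2 / (b - a)) ^ j * (pd (ccoef n) n (Suc j) ((2 * t - a - b) / (b - a)) * (2 / (b - a)))) (at t within S)"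
    by (rule DERIV_cmult)
  then show ?thesis unfolding Pj_def by (simp add: algebra_simps)
qed

lemma Pj_cont: assumes "a < b" shows "continuous_on S (Pj n a b j)"
  unfolding Pj_def using assms by (intro continuous_intros continuous_on_compose2[OF pd_cont]) auto

lemma Pj_top: assumes "a < b" shows "Pj n a b n t = fact n"
proof -
  have "(n + n + 1) choose (2 * n + 1) = 1" by (simp add: mult_2 del: binomial_Suc_Suc)
  then have c: "ccoef n n = 2 ^ n" unfolding ccoef_def by simp
  have f4: "(4::real) ^ n = 2 ^ n * 2 ^ n"
    by (metis power_mult_distrib num_double numeral_times_numeral)
  have h: "(b - a) ^ n \<noteq> 0" "(2::real) ^ n \<noteq> 0" using assms by auto
  have "(b - a) ^ n / 4 ^ n * (2 / (b - a)) ^ n * (2 ^ n * fact n) = (fact n :: real)"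
    unfolding f4 power_divide using h by (simp add: field_simps)
  then show ?thesis unfolding Pj_def pd_top c by (simp add: mult.assoc)
qed

lemma Pj_a: assumes "a < b" shows "Pj n a b j a = (-1) ^ (n + j) * Pj n a b j b"
proof -
  have "(2 * a - a - b) / (b - a) = - 1" "(2 * b - a - b) / (b - a) = 1" using assms by (simp_all add: field_simps)
  then show ?thesis unfolding Pj_def using pd_sym[of n j 1] by (simp add: algebra_simps)
qed

lemma Pj_b_coef:
  assumes ab: "a < b" and k: "k < n"
  shows "Pj n a b (n - 1 - k) b = (b - a) ^ (k + 1) * fact (2 * n - k) * fact (n - k - 1)
           / (2 ^ (2 * k + 2) * fact (2 * n - 2 * k - 1) * fact (k + 1))"
proof -
  obtain j where n: "n = j + k + 1" using k by (metis add.commute add_Suc less_imp_Suc_add plus_1_eq_Suc)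
  have j: "n - 1 - k = j" "2 * n - k = 2 * j + k + 2" "n - k - 1 = j" "2 * n - 2 * k - 1 = 2 * j + 1"
    using n by auto
  have y: "(2 * b - a - b) / (b - a) = 1" using ab by (simp add: field_simps)
  have pd1: "pd (ccoef n) n j 1 = ccoef n j * fact j" by (rule pd_at1) (use n in auto)
  have ch: "real ((n + j + 1) choose (2 * j + 1)) = fact (2 * j + k + 2) / (fact (2 * j + 1) * fact (k + 1))"
  proof -
    have e: "n + j + 1 = 2 * j + k + 2" "2 * j + k + 2 - (2 * j + 1) = k + 1" using n by auto
    have le: "2*j+1 \<le> 2*j+k+2" by simp
    have X: "real ((n+j+1) choose (2*j+1)) = real ((2*j+k+2) choose (2*j+1))" unfolding e(1) ..
    have Y: "real ((2*j+k+2) choose (2*j+1)) = fact (2*j+k+2) / (fact (2*j+1) * fact (2*j+k+2-(2*j+1)))"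
      by (rule binomial_fact[OF le])
    show ?thesis using X Y unfolding e(2) by (simp only:)
  qed
  define h where "h = b - a"
  have h0: "h > 0" using ab h_def by simp
  have e1: "h ^ n = h ^ j * h ^ (k + 1)" unfolding n by (simp add: power_add)
  have e2: "(4::real) ^ n = 2 ^ j * 2 ^ j * 2 ^ (2 * k + 2)"
  proof -
    have "(4::real) ^ n = (2 ^ 2) ^ n" by simp
    also have "\<dots> = 2 ^ (2 * n)" by (simp add: power_mult)
    also have "2 * n = j + j + (2 * k + 2)" using n by simp
    also have "(2::real) ^ (j + j + (2 * k + 2)) = 2 ^ j * 2 ^ j * 2 ^ (2 * k + 2)" by (simp only: power_add)
    finally show ?thesis .
  qed
  have "Pj n a b (n - 1 - k) b = h ^ n / 4 ^ n * (2 / h) ^ j * (ccoef n j * fact j)"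
    unfolding Pj_def j(1) y pd1 h_def ..
  also have "\<dots> = h ^ n / 4 ^ n * (2 ^ j / h ^ j) * (real ((n + j + 1) choose (2 * j + 1)) * 2 ^ j * fact j)"
    unfolding ccoef_def by (simp add: power_divide)
  also have "\<dots> = h ^ (k + 1) * fact (2 * j + k + 2) * fact j / (2 ^ (2 * k + 2) * fact (2 * j + 1) * fact (k + 1))"
  proof -
    have G: "A * H / (B * B * C) * (B / A) * (X / (Y * Z) * B * W) = H * X * W / (C * Y * Z)"
      if "A \<noteq> 0" "B \<noteq> 0" "C \<noteq> 0" "Y \<noteq> 0" "Z \<noteq> 0" for A B C H X Y Z W :: real
      using that by (simp add: field_simps)
    show ?thesis unfolding ch e1 e2
      by (rule G) (use h0 in auto)
  qed
  finally show ?thesis unfolding j(2,3,4) h_def .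
qed

lemma int_abs_P0:
  assumes ab: "a < b"
  shows "((\<lambda>t. \<bar>Pj n a b 0 t\<bar>) has_integral ((b - a) ^ (n + 1) / 4 ^ n)) {a..b}"
proof -
  define g where "g t = (2 * t - a - b) / (b - a)" for t
  have ga: "g a = -1" and gb: "g b = 1" using ab unfolding g_def by (simp_all add: field_simps)
  have cont: "continuous_on {-1..1} (\<lambda>y. \<bar>U n y\<bar>)"
    using U_cont by (intro continuous_intros)
  have sub: "g ` {a..b} \<subseteq> {-1..1}"
  proof
    fix y assume "y \<in> g ` {a..b}"
    then obtain t where t: "t \<in> {a..b}" "y = g t" by blast
    have "- (b - a) \<le> 2 * t - a - b" "2 * t - a - b \<le> b - a" using t by auto
    then have "-1 \<le> (2*t-a-b)/(b-a)" "(2*t-a-b)/(b-a) \<le> 1" using ab by (simp_all add: le_divide_eq divide_le_eq)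
    then show "y \<in> {-1..1}" using t unfolding g_def by auto
  qed
  have "((\<lambda>x. (2 / (b - a)) *\<^sub>R \<bar>U n (g x)\<bar>) has_integral
     (integral {g a..g b} (\<lambda>y. \<bar>U n y\<bar>) - integral {g b..g a} (\<lambda>y. \<bar>U n y\<bar>))) {a..b}"
  proof (rule has_integral_substitution_general[where s="{}" and a=a and b=b and g=g and c="-1" and d=1
        and f="\<lambda>y. \<bar>U n y\<bar>" and g'="\<lambda>x. 2 / (b - a)"])
    show "continuous_on {-1..1} (\<lambda>y. \<bar>U n y\<bar>)" by (rule cont)
    show "g ` {a..b} \<subseteq> {-1..1}" by (rule sub)
    show "continuous_on {a..b} g" unfolding g_def using ab by (intro continuous_intros) auto
    fix x
    have g0: "((\<lambda>t. 2 * t - a - b) has_real_derivative 2) (at x within {a..b})"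
      by (auto intro!: derivative_eq_intros)
    show "(g has_real_derivative 2 / (b - a)) (at x within {a..b})"
      unfolding g_def using DERIV_cdivide[OF g0, of "b - a"] by simp
  qed (use ab in auto)
  also have "integral {g a..g b} (\<lambda>y. \<bar>U n y\<bar>) - integral {g b..g a} (\<lambda>y. \<bar>U n y\<bar>) = 2"
    unfolding ga gb using integral_unique[OF int_abs_U[of n]] by simp
  finally have A: "((\<lambda>x. (2 / (b - a)) * \<bar>U n (g x)\<bar>) has_integral 2) {a..b}" by simp
  have "((\<lambda>x. ((b - a) ^ n / 4 ^ n * ((b - a) / 2)) * ((2 / (b - a)) * \<bar>U n (g x)\<bar>)) has_integral
      ((b - a) ^ n / 4 ^ n * ((b - a) / 2)) * 2) {a..b}"
    by (rule has_integral_mult_right[OF A])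
  moreover have "(b - a) ^ n / 4 ^ n * ((b - a) / 2) * 2 = (b - a) ^ (n + 1) / 4 ^ n"
    by (simp add: field_simps)
  moreover have "((b - a) ^ n / 4 ^ n * ((b - a) / 2)) * ((2 / (b - a)) * \<bar>U n (g x)\<bar>) = \<bar>Pj n a b 0 x\<bar>" for x
  proof -
    have "\<bar>Pj n a b 0 x\<bar> = (b - a) ^ n / 4 ^ n * \<bar>U n (g x)\<bar>"
      unfolding Pj_def U_def g_def using ab by (simp add: abs_mult)
    then show ?thesis using ab by (simp add: field_simps)
  qed
  ultimately show ?thesis by (simp add: mult.commute)
qed

lemma telesc:
  fixes Q R :: "nat \<Rightarrow> real"
  shows "(\<Sum>j<n. (-1)^j * (Q (Suc j) * R (n - 1 - j) + Q j * R (n - j))) = Q 0 * R n - (-1)^n * Q n * R 0"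
proof (induction n arbitrary: Q)
  case 0 then show ?case by simp
next
  case (Suc n)
  have "(\<Sum>j<Suc n. (-1)^j * (Q (Suc j) * R (Suc n - 1 - j) + Q j * R (Suc n - j)))
     = (Q 1 * R n + Q 0 * R (Suc n)) + (\<Sum>j<n. (-1)^(Suc j) * (Q (Suc (Suc j)) * R (n - 1 - j) + Q (Suc j) * R (n - j)))"
    by (subst sum.lessThan_Suc_shift) simp
  also have "(\<Sum>j<n. (-1)^(Suc j) * (Q (Suc (Suc j)) * R (n - 1 - j) + Q (Suc j) * R (n - j)))
      = - (\<Sum>j<n. (-1)^j * ((\<lambda>i. Q (Suc i)) (Suc j) * R (n - 1 - j) + (\<lambda>i. Q (Suc i)) j * R (n - j)))"
    by (simp add: sum_negf[symmetric])
  also have "(\<Sum>j<n. (-1)^j * ((\<lambda>i. Q (Suc i)) (Suc j) * R (n - 1 - j) + (\<lambda>i. Q (Suc i)) j * R (n - j)))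
      = Q 1 * R n - (-1)^n * Q (Suc n) * R 0"
    using Suc.IH[of "\<lambda>i. Q (Suc i)"] by simp
  finally show ?case by simp
qed

lemma sign_term:
  fixes c X Y :: real
  assumes "k < n"
  shows "(-1)^(n - 1 - k) * (c * X - (-1)^(n + (n - 1 - k)) * c * Y) = (-1)^(n - 1) * (c * (Y + (-1)^k * X))"
proof -
  obtain j where n: "n = j + k + 1" using assms by (metis add.commute add_Suc less_imp_Suc_add plus_1_eq_Suc)
  have e: "n - 1 - k = j" "n + (n - 1 - k) = 2 * j + k + 1" "n - 1 = j + k" using n by auto
  have p1: "(-1::real)^(2*j+k+1) = - ((-1)^k)" by (simp add: power_add power_mult)
  have p2: "(-1::real)^(j+k) = (-1)^j * (-1)^k" by (simp add: power_add)
  have p3: "(-1::real)^k * (-1)^k = 1" by (simp add: power_add[symmetric] power_mult[symmetric] mult_2[symmetric] power_mult)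
  show ?thesis unfolding e(2) unfolding e(1) e(3) p1 p2 by (cases "even k") (simp_all add: algebra_simps)
qed

lemma deriv_hyp_D:
  assumes "deriv_hyp n a b f D"
  shows "\<forall>x\<in>{a..b}. D 0 x = f x"
    and "\<And>k x. Suc k < n \<Longrightarrow> x \<in> {a..b} \<Longrightarrow> (D k has_real_derivative D (Suc k) x) (at x within {a..b})"
    and "abs_cont_on a b (D (n - 1))"
    and "AE x in lebesgue_on {a..b}. (D (n - 1) has_real_derivative D n x) (at x within {a..b})"
    and "in_Linf a b (D n)"
  using assms unfolding deriv_hyp_def by auto

lemma ac_all:
  assumes n: "n \<ge> 1" and H: "deriv_hyp n a b f D" and k: "k \<le> n - 1"
  shows "abs_cont_on a b (D k)"
proof -
  have "\<forall>m. m \<le> n - 1 \<longrightarrow> abs_cont_on a b (D (n - 1 - m))"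
  proof (intro allI)
    fix m show "m \<le> n - 1 \<longrightarrow> abs_cont_on a b (D (n - 1 - m))"
    proof (induction m)
      case 0 then show ?case using deriv_hyp_D(3)[OF H] by simp
    next
      case (Suc m)
      show ?case
      proof
        assume m: "Suc m \<le> n - 1"
        have ac: "abs_cont_on a b (D (n - 1 - m))" using Suc m by simp
        have e: "Suc (n - 1 - Suc m) = n - 1 - m" using m by simp
        have lt: "Suc (n - 1 - Suc m) < n" using m n by simp
        have der: "\<And>x. x \<in> {a..b} \<Longrightarrow> (D (n - 1 - Suc m) has_real_derivative D (n - 1 - m) x) (at x within {a..b})"
          using deriv_hyp_D(2)[OF H lt] unfolding e by blast
        show "abs_cont_on a b (D (n - 1 - Suc m))"
          by (rule ac_deriv_cont[OF der ac_cont[OF ac]])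
      qed
    qed
  qed
  then have "abs_cont_on a b (D (n - 1 - (n - 1 - k)))" using k by simp
  moreover have "n - 1 - (n - 1 - k) = k" using k by simp
  ultimately show ?thesis by simp
qed

lemma main_identity:
  assumes n: "n \<ge> 1" and ab: "a < b" and H: "deriv_hyp n a b f D"
  shows "((\<lambda>x. Pj n a b 0 x * D n x) has_integral ((-1)^n * fact n * E_n n a b f D)) {a..b}"
proof -
  note H0 = deriv_hyp_D(1)[OF H] and H1 = deriv_hyp_D(2)[OF H] and H3 = deriv_hyp_D(4)[OF H]
  define Phi where "Phi x = (\<Sum>j<n. (-1)^j * (Pj n a b j x * D (n - 1 - j) x))" for x
  have acPhi: "abs_cont_on a b Phi"
    unfolding Phi_def
  proof (rule ac_sum)
    fix j assume j: "j \<in> {..<n}"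
    have acP: "abs_cont_on a b (Pj n a b j)"
      by (rule ac_deriv_cont[OF Pj_deriv[OF ab] Pj_cont[OF ab]])
    have acD: "abs_cont_on a b (D (n - 1 - j))" by (rule ac_all[OF n H]) simp
    have "abs_cont_on a b (\<lambda>x. (-1)^j * (Pj n a b j x * D (n - 1 - j) x))"
      by (rule ac_mult[OF ac_const ac_mult[OF acP acD]])
    then show "abs_cont_on a b (\<lambda>x. (-1)^j * (Pj n a b j x * D (n - 1 - j) x))" .
  qed simp
  have dD: "(D (n - 1 - j) has_real_derivative D (n - j) x) (at x within {a..b})"
    if x: "x \<in> {a..b}" and j: "j < n" and d: "(D (n - 1) has_real_derivative D n x) (at x within {a..b})" for x j
  proof (cases j)
    case 0 then show ?thesis using d by simp
  next
    case (Suc i)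
    have lt: "Suc (n - 1 - j) < n" and e: "Suc (n - 1 - j) = n - j" using j Suc by auto
    show ?thesis using H1[OF lt x] unfolding e .
  qed
  have dPhi: "(Phi has_real_derivative (Pj n a b 0 x * D n x - (-1)^n * fact n * f x)) (at x within {a..b})"
    if x: "x \<in> {a..b}" and d: "(D (n - 1) has_real_derivative D n x) (at x within {a..b})" for x
  proof -
    have "((\<lambda>x. \<Sum>j<n. (-1)^j * (Pj n a b j x * D (n - 1 - j) x)) has_real_derivative
      (\<Sum>j<n. (-1)^j * (Pj n a b (Suc j) x * D (n - 1 - j) x + D (n - j) x * Pj n a b j x))) (at x within {a..b})"
    proof (rule DERIV_sum)
      fix j assume "j \<in> {..<n}"
      then have j: "j < n" by simp
      show "((\<lambda>x. (-1)^j * (Pj n a b j x * D (n - 1 - j) x)) has_real_derivative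
        (-1)^j * (Pj n a b (Suc j) x * D (n - 1 - j) x + D (n - j) x * Pj n a b j x)) (at x within {a..b})"
        by (rule DERIV_cmult[OF DERIV_mult[OF Pj_deriv[OF ab] dD[OF x j d]]])
    qed
    moreover have "(\<Sum>j<n. (-1)^j * (Pj n a b (Suc j) x * D (n - 1 - j) x + D (n - j) x * Pj n a b j x))
       = Pj n a b 0 x * D n x - (-1)^n * fact n * f x"
    proof -
      have "(\<Sum>j<n. (-1)^j * (Pj n a b (Suc j) x * D (n - 1 - j) x + D (n - j) x * Pj n a b j x))
         = (\<Sum>j<n. (-1)^j * ((\<lambda>i. Pj n a b i x) (Suc j) * (\<lambda>i. D i x) (n - 1 - j) + (\<lambda>i. Pj n a b i x) j * (\<lambda>i. D i x) (n - j)))"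
        by (simp add: mult.commute)
      also have "\<dots> = Pj n a b 0 x * D n x - (-1)^n * Pj n a b n x * D 0 x" by (rule telesc)
      also have "\<dots> = Pj n a b 0 x * D n x - (-1)^n * fact n * f x" using Pj_top[OF ab] H0 x by simp
      finally show ?thesis .
    qed
    ultimately show ?thesis unfolding Phi_def by simp
  qed
  have AEd: "AE x in lebesgue_on {a..b}. (Phi has_real_derivative (Pj n a b 0 x * D n x - (-1)^n * fact n * f x)) (at x within {a..b})"
  proof -
    have sp: "AE x in lebesgue_on {a..b}. x \<in> {a..b}"
      by (rule AE_I2) simp
    show ?thesis using H3 sp by eventually_elim (rule dPhi)
  qed
  have I1: "((\<lambda>x. Pj n a b 0 x * D n x - (-1)^n * fact n * f x) has_integral (Phi b - Phi a)) {a..b}"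
    by (rule ftc_ac_sub[OF order_refl less_imp_le[OF ab] order_refl acPhi AEd])
  have contf: "continuous_on {a..b} f"
  proof -
    have "continuous_on {a..b} (D 0)" by (rule ac_cont[OF ac_all[OF n H]]) simp
    then show ?thesis using H0 continuous_on_eq by blast
  qed
  have If: "(f has_integral integral {a..b} f) {a..b}"
    using integrable_continuous_real[OF contf] by (rule integrable_integral)
  have I2: "((\<lambda>x. (Pj n a b 0 x * D n x - (-1)^n * fact n * f x) + (-1)^n * fact n * f x) has_integral
      (Phi b - Phi a + (-1)^n * fact n * integral {a..b} f)) {a..b}"
    by (rule has_integral_add[OF I1 has_integral_mult_right[OF If]])
  define c where "c k = (b - a) ^ (k + 1) * fact (2 * n - k) * fact (n - k - 1)
           / (2 ^ (2 * k + 2) * fact (2 * n - 2 * k - 1) * fact (k + 1))" for k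
  define S where "S = (\<Sum>k<n. c k * (D k a + (-1) ^ k * D k b))"
  have En: "E_n n a b f D = integral {a..b} f - (1 / fact n) * S"
    unfolding E_n_def S_def c_def ..
  have PhiS: "Phi b - Phi a = (-1)^(n - 1) * S"
  proof -
    have "Phi b - Phi a = (\<Sum>j<n. (-1)^j * (Pj n a b j b * D (n - 1 - j) b - Pj n a b j a * D (n - 1 - j) a))"
      unfolding Phi_def by (simp add: sum_subtractf[symmetric] algebra_simps)
    also have "\<dots> = (\<Sum>j\<in>{0..<n}. (-1)^j * (Pj n a b j b * D (n - 1 - j) b - Pj n a b j a * D (n - 1 - j) a))"
      by (simp add: atLeast0LessThan)
    also have "\<dots> = (\<Sum>k\<in>{0..<n}. (-1)^(n - 1 - k) * (Pj n a b (n - 1 - k) b * D (n - 1 - (n - 1 - k)) b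
          - Pj n a b (n - 1 - k) a * D (n - 1 - (n - 1 - k)) a))"
      by (subst sum.atLeastLessThan_rev) simp
    also have "\<dots> = (\<Sum>k<n. (-1)^(n - 1) * (c k * (D k a + (-1)^k * D k b)))"
    proof (rule sum.cong)
      fix k assume "k \<in> {..<n}"
      then have k: "k < n" by simp
      have e: "n - 1 - (n - 1 - k) = k" using k by simp
      have Pa: "Pj n a b (n - 1 - k) a = (-1)^(n + (n - 1 - k)) * c k"
        unfolding Pj_a[OF ab] Pj_b_coef[OF ab k] c_def ..
      have Pb: "Pj n a b (n - 1 - k) b = c k"
        unfolding Pj_b_coef[OF ab k] c_def ..
      show "(-1)^(n - 1 - k) * (Pj n a b (n - 1 - k) b * D (n - 1 - (n - 1 - k)) b
          - Pj n a b (n - 1 - k) a * D (n - 1 - (n - 1 - k)) a) = (-1)^(n - 1) * (c k * (D k a + (-1)^k * D k b))"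
        unfolding e Pa Pb using sign_term[OF k, of "c k" "D k b" "D k a"] by simp
    qed (simp add: atLeast0LessThan)
    also have "\<dots> = (-1)^(n - 1) * S" unfolding S_def by (simp add: sum_distrib_left)
    finally show ?thesis .
  qed
  have final: "Phi b - Phi a + (-1)^n * fact n * integral {a..b} f = (-1)^n * fact n * E_n n a b f D"
  proof -
    have s: "(-1::real)^(n - 1) = - ((-1)^n)"
    proof -
      have "n = Suc (n - 1)" using n by simp
      then have "(-1::real)^n = - ((-1)^(n-1))" by (metis power_Suc mult_minus1)
      then show ?thesis by simp
    qed
    have fn: "(fact n :: real) \<noteq> 0" by simp
    show ?thesis unfolding PhiS En s using fn by (simp add: algebra_simps)
  qed
  show ?thesis using I2 unfolding final by simp
qed

lemma lebesgue_on_Icc_nonzero: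
  assumes "a < (b::real)"
  shows "emeasure (lebesgue_on {a..b}) (space (lebesgue_on {a..b})) \<noteq> 0"
proof -
  have "emeasure (lebesgue_on {a..b}) {a..b} = emeasure lebesgue {a..b}"
    by (simp add: emeasure_restrict_space)
  also have "\<dots> = ennreal (b - a)" using assms by simp
  finally show ?thesis using assms by simp
qed

lemma Linf_M:
  assumes ab: "a < b" and L: "in_Linf a b g"
  shows "0 \<le> real_of_ereal (Linf_norm a b g)"
    and "AE x in lebesgue_on {a..b}. \<bar>g x\<bar> \<le> real_of_ereal (Linf_norm a b g)"
proof -
  have gm: "g \<in> borel_measurable (lebesgue_on {a..b})" and fin: "Linf_norm a b g < \<infinity>"
    using L unfolding in_Linf_def by auto
  have m: "(\<lambda>x. ereal \<bar>g x\<bar>) \<in> borel_measurable (lebesgue_on {a..b})"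
    by (intro borel_measurable_ereal borel_measurable_abs gm)
  have "esssup (lebesgue_on {a..b}) (\<lambda>x. ereal 0) \<le> esssup (lebesgue_on {a..b}) (\<lambda>x. ereal \<bar>g x\<bar>)"
    by (rule esssup_mono) auto
  moreover have "esssup (lebesgue_on {a..b}) (\<lambda>x. ereal 0) = 0"
    using esssup_const[OF lebesgue_on_Icc_nonzero[OF ab], of "ereal 0"] by (simp add: zero_ereal_def)
  ultimately have ge: "0 \<le> Linf_norm a b g" unfolding Linf_norm_def by simp
  then obtain r where r: "Linf_norm a b g = ereal r" "r \<ge> 0" using fin
    by (cases "Linf_norm a b g") auto
  then show "0 \<le> real_of_ereal (Linf_norm a b g)" by simp
  have "AE x in lebesgue_on {a..b}. ereal \<bar>g x\<bar> \<le> Linf_norm a b g"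
    unfolding Linf_norm_def by (rule esssup_AE)
  then show "AE x in lebesgue_on {a..b}. \<bar>g x\<bar> \<le> real_of_ereal (Linf_norm a b g)"
    unfolding r by simp
qed

lemma upper_bound:
  assumes n: "n \<ge> 1" and ab: "a < b" and H: "deriv_hyp n a b f D"
  shows "\<bar>E_n n a b f D\<bar> \<le> real_of_ereal (Linf_norm a b (D n)) * (b - a) ^ (n + 1) / (2 ^ (2 * n) * fact n)"
proof -
  define M where "M = real_of_ereal (Linf_norm a b (D n))"
  have L: "in_Linf a b (D n)" using deriv_hyp_D(5)[OF H] .
  have M0: "M \<ge> 0" unfolding M_def by (rule Linf_M(1)[OF ab L])
  have AEM: "AE x in lebesgue_on {a..b}. \<bar>D n x\<bar> \<le> M" unfolding M_def by (rule Linf_M(2)[OF ab L])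
  obtain N where NP: "{x \<in> space (lebesgue_on {a..b}). \<not> \<bar>D n x\<bar> \<le> M} \<subseteq> N"
    and N1: "emeasure (lebesgue_on {a..b}) N = 0" and N2: "N \<in> sets (lebesgue_on {a..b})"
    by (rule AE_E[OF AEM]) blast
  have "N \<in> null_sets (lebesgue_on {a..b})" using N1 N2 by (simp add: null_sets_def)
  then have "N \<in> null_sets lebesgue" by (simp add: null_sets_restrict_space)
  then have negl: "negligible N" by (simp add: negligible_iff_null_sets)
  define g where "g x = (if x \<in> N then 0 else D n x)" for x
  have I: "((\<lambda>x. Pj n a b 0 x * D n x) has_integral ((-1)^n * fact n * E_n n a b f D)) {a..b}"
    by (rule main_identity[OF n ab H])
  have Ig: "((\<lambda>x. Pj n a b 0 x * g x) has_integral ((-1)^n * fact n * E_n n a b f D)) {a..b}"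
    by (rule has_integral_spike[OF negl _ I]) (simp add: g_def)
  have IP: "((\<lambda>x. M * \<bar>Pj n a b 0 x\<bar>) has_integral (M * ((b - a) ^ (n + 1) / 4 ^ n))) {a..b}"
    by (rule has_integral_mult_right[OF int_abs_P0[OF ab]])
  have "norm (integral {a..b} (\<lambda>x. Pj n a b 0 x * g x)) \<le> integral {a..b} (\<lambda>x. M * \<bar>Pj n a b 0 x\<bar>)"
  proof (rule integral_norm_bound_integral)
    show "(\<lambda>x. Pj n a b 0 x * g x) integrable_on {a..b}" using Ig by blast
    show "(\<lambda>x. M * \<bar>Pj n a b 0 x\<bar>) integrable_on {a..b}" using IP by blast
    fix x assume x: "x \<in> {a..b}"
    have "\<bar>g x\<bar> \<le> M" using NP x M0 unfolding g_def by auto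
    then have "\<bar>Pj n a b 0 x\<bar> * \<bar>g x\<bar> \<le> \<bar>Pj n a b 0 x\<bar> * M" by (intro mult_left_mono) auto
    then show "norm (Pj n a b 0 x * g x) \<le> M * \<bar>Pj n a b 0 x\<bar>" by (simp add: abs_mult mult.commute)
  qed
  then have "\<bar>(-1)^n * fact n * E_n n a b f D\<bar> \<le> M * ((b - a) ^ (n + 1) / 4 ^ n)"
    using integral_unique[OF Ig] integral_unique[OF IP] by simp
  then have A: "fact n * \<bar>E_n n a b f D\<bar> \<le> M * ((b - a) ^ (n + 1) / 4 ^ n)"
    by (simp add: abs_mult)
  have f4: "(2::real) ^ (2 * n) = 4 ^ n" by (simp add: power_mult)
  have fp: "(fact n :: real) > 0" by simp
  show ?thesis unfolding M_def[symmetric] f4 using A fp by (simp add: field_simps)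
qed

primrec Gf :: "real \<Rightarrow> (real \<Rightarrow> real) \<Rightarrow> nat \<Rightarrow> real \<Rightarrow> real" where
  "Gf a s 0 = s"
| "Gf a s (Suc i) = (\<lambda>t. integral {a..t} (Gf a s i))"

lemma Gf_props:
  assumes si: "s integrable_on {a..b}"
  shows "Gf a s i integrable_on {a..b} \<and> continuous_on {a..b} (Gf a s (Suc i))"
proof (induction i)
  case 0
  then show ?case using si indefinite_integral_continuous_1[OF si] by simp
next
  case (Suc i)
  have c: "continuous_on {a..b} (Gf a s (Suc i))" using Suc by simp
  have I: "Gf a s (Suc i) integrable_on {a..b}" by (rule integrable_continuous_real[OF c])
  show ?case using I indefinite_integral_continuous_1[OF I] by simp
qed

lemma lip_integral:
  fixes s :: "real \<Rightarrow> real"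
  assumes si: "s integrable_on {a..b}" and bnd: "\<And>t. \<bar>s t\<bar> \<le> 1"
    and x: "x \<in> {a..b}" and y: "y \<in> {a..b}"
  shows "\<bar>integral {a..x} s - integral {a..y} s\<bar> \<le> 1 * \<bar>x - y\<bar>"
proof -
  have key: "\<bar>integral {a..v} s - integral {a..u} s\<bar> \<le> v - u" if uv: "u \<le> v" "u \<in> {a..b}" "v \<in> {a..b}" for u v
  proof -
    have sv: "s integrable_on {a..v}" by (rule integrable_subinterval_real[OF si]) (use uv in auto)
    have "integral {a..u} s + integral {u..v} s = integral {a..v} s"
      by (rule Henstock_Kurzweil_Integration.integral_combine[OF _ uv(1) sv]) (use uv in auto)
    then have "integral {a..v} s - integral {a..u} s = integral {u..v} s" by simp
    moreover have "norm (integral {u..v} s) \<le> integral {u..v} (\<lambda>t. 1)"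
    proof (rule integral_norm_bound_integral)
      show "s integrable_on {u..v}" by (rule integrable_subinterval_real[OF si]) (use uv in auto)
      show "(\<lambda>t. 1::real) integrable_on {u..v}" using integrable_const[of "1::real" u v] by simp
    qed (use bnd in auto)
    moreover have "integral {u..v} (\<lambda>t. 1::real) = v - u" using uv by simp
    ultimately show ?thesis by simp
  qed
  show ?thesis
  proof (cases "x \<le> y")
    case True then show ?thesis using key[OF True x y] by (simp add: abs_minus_commute)
  next
    case False then show ?thesis using key[of y x] x y by simp
  qed
qed

lemma P0_zeros_finite:
  assumes ab: "a < b"
  shows "finite {t \<in> {a..b}. Pj n a b 0 t = 0}"
proof -
  define g where "g t = (2 * t - a - b) / (b - a)" for t
  have "{t \<in> {a..b}. Pj n a b 0 t = 0} \<subseteq> (\<lambda>y. (a + b) / 2 + (b - a) / 2 * y) ` {y \<in> {-1..1}. U n y = 0}"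
  proof
    fix t assume t: "t \<in> {t \<in> {a..b}. Pj n a b 0 t = 0}"
    have "Pj n a b 0 t = (b - a) ^ n / 4 ^ n * U n (g t)" unfolding Pj_def U_def g_def by simp
    moreover have "(b - a) ^ n / 4 ^ n \<noteq> (0::real)" using ab by simp
    ultimately have U0: "U n (g t) = 0" using t ab by auto
    have "- (b - a) \<le> 2 * t - a - b" "2 * t - a - b \<le> b - a" using t by auto
    then have "-1 \<le> g t" "g t \<le> 1" using ab unfolding g_def by (simp_all add: le_divide_eq divide_le_eq)
    moreover have "t = (a + b) / 2 + (b - a) / 2 * g t" using ab unfolding g_def by (simp add: field_simps)
    ultimately show "t \<in> (\<lambda>y. (a + b) / 2 + (b - a) / 2 * y) ` {y \<in> {-1..1}. U n y = 0}"
      using U0 by auto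
  qed
  then show ?thesis using finite_subset U_zeros_finite by blast
qed

lemma sgn_mult_self: "(x::real) * sgn x = \<bar>x\<bar>"
  by (simp add: sgn_if abs_if)

lemma sharp:
  assumes n: "n \<ge> 1" and ab: "a < b" and C: "C < 1 / (2 ^ (2 * n) * fact n)"
  shows "\<exists>f D. deriv_hyp n a b f D \<and>
               \<bar>E_n n a b f D\<bar> > C * real_of_ereal (Linf_norm a b (D n)) * (b - a) ^ (n + 1)"
proof -
  define P where "P = Pj n a b 0"
  define s where "s t = sgn (P t)" for t
  define D where "D k = Gf a s (n - k)" for k
  define f where "f = Gf a s n"
  have Pc: "continuous_on UNIV P" unfolding P_def by (rule Pj_cont[OF ab])
  have sm: "s \<in> borel_measurable (lebesgue_on {a..b})"
  proof -
    have "P \<in> borel_measurable (lebesgue_on {a..b})"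
      by (rule continuous_imp_measurable_on_sets_lebesgue) (use Pc continuous_on_subset in auto)
    then show ?thesis unfolding s_def by (rule measurable_compose[OF _ borel_measurable_sgn])
  qed
  have sb: "\<bar>s t\<bar> \<le> 1" for t unfolding s_def by (simp add: abs_sgn_eq)
  have si: "s integrable_on {a..b}"
    by (rule measurable_bounded_by_integrable_imp_integrable_real[OF sm, of "\<lambda>_. 1"]) (use sb in auto)
  note GP = Gf_props[OF si]
  have Dn: "D n = s" unfolding D_def by simp
  have Dn1: "D (n - 1) = (\<lambda>t. integral {a..t} s)" unfolding D_def using n by simp
  have hyp: "deriv_hyp n a b f D"
    unfolding deriv_hyp_def
  proof (intro conjI ballI allI impI)
    fix x assume "x \<in> {a..b}" then show "D 0 x = f x" unfolding D_def f_def by simp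
  next
    fix k x assume k: "Suc k < n" and x: "x \<in> {a..b}"
    have e1: "n - k = Suc (n - Suc k)" using k by simp
    have e2: "n - Suc k = Suc (n - Suc k - 1)" using k by simp
    have c: "continuous_on {a..b} (Gf a s (n - Suc k))" using GP[of "n - Suc k - 1"] e2 by metis
    show "(D k has_real_derivative D (Suc k) x) (at x within {a..b})"
      unfolding D_def e1 Gf.simps(2) by (rule integral_has_real_derivative[OF c x])
  next
    show "abs_cont_on a b (D (n - 1))" unfolding Dn1
      by (rule ac_lipschitz[of a b _ 1]) (use lip_integral[OF si sb] in auto)
  next
    define Z where "Z = {t \<in> {a..b}. P t = 0}"
    have Zf: "finite Z" unfolding Z_def P_def by (rule P0_zeros_finite[OF ab])
    have "Z \<in> null_sets lebesgue" using negligible_finite[OF Zf] by (simp add: negligible_iff_null_sets)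
    moreover have "Z \<subseteq> {a..b}" unfolding Z_def by auto
    ultimately have Zn: "Z \<in> null_sets (lebesgue_on {a..b})" by (simp add: null_sets_restrict_space)
    show "AE x in lebesgue_on {a..b}. (D (n - 1) has_real_derivative D n x) (at x within {a..b})"
    proof (rule AE_I'[OF Zn], safe)
      fix x assume x: "x \<in> space (lebesgue_on {a..b})"
        and nd: "\<not> (D (n - 1) has_real_derivative D n x) (at x within {a..b})"
      have xab: "x \<in> {a..b}" using x by simp
      show "x \<in> Z"
      proof (rule ccontr)
        assume "x \<notin> Z"
        then have Px: "P x \<noteq> 0" using xab unfolding Z_def by simp
        have "isCont P x" using Pc by (simp add: continuous_on_eq_continuous_at)
        then have "isCont s x" unfolding s_def using Px by (intro isCont_sgn)
        then have cw: "continuous (at x within ({a..b} - {})) s"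
          using continuous_at_imp_continuous_within by blast
        have "((\<lambda>u. integral {a..u} s) has_vector_derivative s x) (at x within ({a..b} - {}))"
          by (rule integral_has_vector_derivative_continuous_at[OF si _ _ cw]) (use xab in auto)
        then have "(D (n - 1) has_real_derivative D n x) (at x within {a..b})"
          unfolding Dn Dn1 by (simp add: has_real_derivative_iff_has_vector_derivative)
        then show False using nd by simp
      qed
    qed
  next
    have m: "(\<lambda>x. ereal \<bar>s x\<bar>) \<in> borel_measurable (lebesgue_on {a..b})"
      by (intro borel_measurable_ereal borel_measurable_abs sm)
    have "Linf_norm a b s \<le> 1"
      unfolding Linf_norm_def by (rule esssup_I[OF m]) (use sb in auto)
    then show "in_Linf a b (D n)" unfolding in_Linf_def Dn using sm by auto
  qed
  have Lle: "real_of_ereal (Linf_norm a b (D n)) \<le> 1"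
  proof -
    have m: "(\<lambda>x. ereal \<bar>s x\<bar>) \<in> borel_measurable (lebesgue_on {a..b})"
      by (intro borel_measurable_ereal borel_measurable_abs sm)
    have le: "Linf_norm a b s \<le> 1"
      unfolding Linf_norm_def by (rule esssup_I[OF m]) (use sb in auto)
    have ge: "0 \<le> real_of_ereal (Linf_norm a b s)" by (rule Linf_M(1)[OF ab]) (use hyp Dn in \<open>simp add: deriv_hyp_def\<close>)
    show ?thesis unfolding Dn using le ge by (cases "Linf_norm a b s") auto
  qed
  have L0: "0 \<le> real_of_ereal (Linf_norm a b (D n))"
    by (rule Linf_M(1)[OF ab deriv_hyp_D(5)[OF hyp]])
  have I1: "((\<lambda>x. P x * s x) has_integral ((-1)^n * fact n * E_n n a b f D)) {a..b}"
    using main_identity[OF n ab hyp] unfolding Dn P_def .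
  have I2: "((\<lambda>x. P x * s x) has_integral ((b - a) ^ (n + 1) / 4 ^ n)) {a..b}"
    using int_abs_P0[OF ab, of n] unfolding P_def[symmetric] s_def sgn_mult_self .
  have "(-1)^n * fact n * E_n n a b f D = (b - a) ^ (n + 1) / 4 ^ n"
    using has_integral_unique[OF I1 I2] .
  then have "\<bar>(-1)^n * fact n * E_n n a b f D\<bar> = (b - a) ^ (n + 1) / 4 ^ n" using ab by simp
  then have "fact n * \<bar>E_n n a b f D\<bar> = (b - a) ^ (n + 1) / 4 ^ n" by (simp add: abs_mult)
  then have Eval: "\<bar>E_n n a b f D\<bar> = (b - a) ^ (n + 1) / (4 ^ n * fact n)"
    by (simp add: field_simps)
  have f4: "(2::real) ^ (2 * n) = 4 ^ n" by (simp add: power_mult)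
  have h: "(b - a) ^ (n + 1) > 0" using ab by simp
  have V: "(b - a) ^ (n + 1) / (4 ^ n * fact n) > 0" using h by simp
  have "C * real_of_ereal (Linf_norm a b (D n)) * (b - a) ^ (n + 1) < \<bar>E_n n a b f D\<bar>"
  proof (cases "C \<le> 0")
    case True
    have "C * real_of_ereal (Linf_norm a b (D n)) \<le> 0" using True L0 by (simp add: mult_nonpos_nonneg)
    then have "C * real_of_ereal (Linf_norm a b (D n)) * (b - a) ^ (n + 1) \<le> 0"
      using h by (simp add: mult_nonpos_nonneg)
    then show ?thesis using V Eval by simp
  next
    case False
    then have Cp: "C > 0" by simp
    have "C * real_of_ereal (Linf_norm a b (D n)) * (b - a) ^ (n + 1) \<le> C * 1 * (b - a) ^ (n + 1)"
      using Cp Lle h by (intro mult_right_mono mult_left_mono) auto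
    also have "\<dots> < (1 / (4 ^ n * fact n)) * (b - a) ^ (n + 1)"
      using mult_strict_right_mono[OF C[unfolded f4] h] by simp
    also have "\<dots> = \<bar>E_n n a b f D\<bar>" unfolding Eval by simp
    finally show ?thesis .
  qed
  then show ?thesis using hyp by blast
qed

theorem corollary2p5:
  fixes n :: nat and a b :: real
  assumes "n \<ge> 1" and "a < b"
  shows "(\<forall>f D. deriv_hyp n a b f D \<longrightarrow>
            \<bar>E_n n a b f D\<bar> \<le> real_of_ereal (Linf_norm a b (D n)) * (b - a) ^ (n + 1) / (2 ^ (2 * n) * fact n))
       \<and> (\<forall>C::real. C < 1 / (2 ^ (2 * n) * fact n) \<longrightarrow>
            (\<exists>f D. deriv_hyp n a b f D \<and>
               \<bar>E_n n a b f D\<bar> > C * real_of_ereal (Linf_norm a b (D n)) * (b - a) ^ (n + 1)))"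
proof (intro conjI allI impI)
  fix f D assume "deriv_hyp n a b f D"
  then show "\<bar>E_n n a b f D\<bar> \<le> real_of_ereal (Linf_norm a b (D n)) * (b - a) ^ (n + 1) / (2 ^ (2 * n) * fact n)"
    by (rule upper_bound[OF assms(1,2)])
next
  fix C :: real assume "C < 1 / (2 ^ (2 * n) * fact n)"
  then show "\<exists>f D. deriv_hyp n a b f D \<and>
               \<bar>E_n n a b f D\<bar> > C * real_of_ereal (Linf_norm a b (D n)) * (b - a) ^ (n + 1)"
    by (rule sharp[OF assms(1,2)])
qed

end
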